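(* Let $\mathcal{A}$ be any deterministic distributed algorithm with advice (with its oracle) that solves Selection in $\psi_S(G)$ rounds on every feasible graph $G$. Then for all integers $k\ge 1$ and $\Delta\ge 5$ there exists a graph $G$ with maximum degree $\Delta$ and $\psi_S(G)=k$ for which $\mathcal{A}$ requires advice of size $\Omega((\Delta-1)^k\log\Delta)$ (i.e., the advice string the oracle gives for $G$ has length at least $c(\Delta-1)^k\log\Delta$ for an absolute constant $c>0$).
   Context: Networks are simple undirected connected graphs without node identifiers; at each node of degree $d$ incident edges have distinct local port numbers $0,\dots,d-1$. Communication is in the synchronous LOCAL model; initially a node knows only its degree. In the advice model an oracle knowing the whole port-labeled graph gives the same binary string to all nodes at the start; its length is the size of advice. A graph is feasible if all nodes have distinct views (the view of $v$ being the infinite tree of all finite paths from $v$ coded by their port-number sequences). Selection: exactly one node outputs "leader" and all others output "non-leader". The Selection index $\psi_S(G)$ is the minimum number of rounds in which Selection can be solved on $G$ by a deterministic algorithm when every node knows the complete map of $G$ (an isomorphic copy with all port numbers). *)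

theory Defs
  imports Complex_Main
begin

text \<open>Port-labeled anonymous networks. Nodes of a graph are represented by the
naturals below pg_n G (the names are invisible to the nodes).
pg_port G v u is the local port number at v of the edge {v,u}.\<close>

record pgraph =
  pg_n    :: nat
  pg_adj  :: "nat \<Rightarrow> nat \<Rightarrow> bool"
  pg_port :: "nat \<Rightarrow> nat \<Rightarrow> nat"

definition deg :: "pgraph \<Rightarrow> nat \<Rightarrow> nat" where
  "deg G v = card {u. u < pg_n G \<and> pg_adj G v u}"

definition maxdeg :: "pgraph \<Rightarrow> nat" where
  "maxdeg G = Max (deg G ` {..<pg_n G})"

definition wf_pgraph :: "pgraph \<Rightarrow> bool" where
  "wf_pgraph G \<longleftrightarrow>
     pg_n G \<ge> 1 \<and>
     (\<forall>u v. pg_adj G u v \<longrightarrow> u < pg_n G \<and> v < pg_n G) \<and>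
     (\<forall>u v. pg_adj G u v \<longrightarrow> pg_adj G v u) \<and>
     (\<forall>v. \<not> pg_adj G v v) \<and>
     (\<forall>u<pg_n G. \<forall>v<pg_n G. (u, v) \<in> {(a, b). pg_adj G a b}\<^sup>*) \<and>
     (\<forall>v<pg_n G. bij_betw (pg_port G v) {u. pg_adj G v u} {0..<deg G v})"

definition nbr :: "pgraph \<Rightarrow> nat \<Rightarrow> nat \<Rightarrow> nat option" where
  "nbr G v p = (if \<exists>u. pg_adj G v u \<and> pg_port G v u = p
                then Some (THE u. pg_adj G v u \<and> pg_port G v u = p) else None)"

text \<open>Follow a path from v coded by its sequence of (outgoing port, incoming port) pairs.\<close>
fun follow :: "pgraph \<Rightarrow> nat \<Rightarrow> (nat \<times> nat) list \<Rightarrow> nat option" where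
  "follow G v [] = Some v"
| "follow G v ((p, q) # ps) =
     (case nbr G v p of
        None \<Rightarrow> None
      | Some u \<Rightarrow> (if pg_port G u v = q then follow G u ps else None))"

text \<open>This is exactly
the information a node has after t rounds in the LOCAL model.\<close>
type_synonym tview = "((nat \<times> nat) list \<times> nat) set"

definition view_trunc :: "pgraph \<Rightarrow> nat \<Rightarrow> nat \<Rightarrow> tview" where
  "view_trunc G t v = {(ps, deg G w) | ps w. length ps \<le> t \<and> follow G v ps = Some w}"

text \<open>Feasible: all nodes have distinct (infinite) views, i.e. distinct views of some depth.\<close>
definition feasible :: "pgraph \<Rightarrow> bool" where
  "feasible G \<longleftrightarrow>
     (\<forall>u<pg_n G. \<forall>v<pg_n G. u \<noteq> v \<longrightarrow> (\<exists>t. view_trunc G t u \<noteq> view_trunc G t v))"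

text \<open>Selection index: minimum t such that some deterministic t-round algorithm
that knows the map of G (so its decision may depend on G, but a node only sees
its view of depth t) elects exactly one leader.\<close>
definition selection_index :: "pgraph \<Rightarrow> nat" where
  "selection_index G =
     (LEAST t. \<exists>f :: tview \<Rightarrow> bool. card {v. v < pg_n G \<and> f (view_trunc G t v)} = 1)"

text \<open>Algorithm with advice: given the advice string (common to all nodes) and the
current view V^t(v) after t rounds, a node either continues (None) or stops with
sel_output Some True (leader) / Some False (non-leader).\<close>
type_synonym algorithm = "bool list \<Rightarrow> tview \<Rightarrow> bool option"
type_synonym advice_map = "pgraph \<Rightarrow> bool list"

definition stop_round :: "algorithm \<Rightarrow> advice_map \<Rightarrow> pgraph \<Rightarrow> nat \<Rightarrow> nat" where
  "stop_round A Orc G v = (LEAST t. A (Orc G) (view_trunc G t v) \<noteq> None)"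

definition sel_output :: "algorithm \<Rightarrow> advice_map \<Rightarrow> pgraph \<Rightarrow> nat \<Rightarrow> bool option" where
  "sel_output A Orc G v = A (Orc G) (view_trunc G (stop_round A Orc G v) v)"

definition solves_selection_in :: "algorithm \<Rightarrow> advice_map \<Rightarrow> pgraph \<Rightarrow> nat \<Rightarrow> bool" where
  "solves_selection_in A Orc G T \<longleftrightarrow>
     (\<forall>v<pg_n G. \<exists>t\<le>T. A (Orc G) (view_trunc G t v) \<noteq> None) \<and>
     card {v. v < pg_n G \<and> sel_output A Orc G v = Some True} = 1"

end

theory Submission
  imports Defs "HOL-Library.FuncSet"
begin

fun afollow :: "('a \<Rightarrow> nat \<Rightarrow> 'a option) \<Rightarrow> ('a \<Rightarrow> 'a \<Rightarrow> nat) \<Rightarrow> 'a \<Rightarrow> (nat \<times> nat) list \<Rightarrow> 'a option" where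
  "afollow nb ap a [] = Some a"
| "afollow nb ap a ((p, q) # ps) =
     (case nb a p of None \<Rightarrow> None
      | Some b \<Rightarrow> (if ap b a = q then afollow nb ap b ps else None))"

definition aview :: "('a \<Rightarrow> nat \<Rightarrow> 'a option) \<Rightarrow> ('a \<Rightarrow> nat) \<Rightarrow> ('a \<Rightarrow> 'a \<Rightarrow> nat) \<Rightarrow> nat \<Rightarrow> 'a \<Rightarrow> tview" where
  "aview nb ad ap t a = {(ps, ad x) | ps x. length ps \<le> t \<and> afollow nb ap a ps = Some x}"

lemma afollow_append:
  "afollow nb ap a (xs @ ys) = (case afollow nb ap a xs of None \<Rightarrow> None | Some b \<Rightarrow> afollow nb ap b ys)"
  by (induction nb ap a xs rule: afollow.induct) (auto split: option.splits)

lemma bisim_follow: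
  assumes H: "\<And>t a b. R t a b \<Longrightarrow> ad1 a = ad2 b \<and> (\<forall>p. (nb1 a p = None \<longleftrightarrow> nb2 b p = None)) \<and>
      (0 < t \<longrightarrow> (\<forall>p a' b'. nb1 a p = Some a' \<longrightarrow> nb2 b p = Some b' \<longrightarrow> ap1 a' a = ap2 b' b \<and> R (t - 1) a' b'))"
  shows "R t a b \<Longrightarrow> length ps \<le> t \<Longrightarrow>
    (case afollow nb1 ap1 a ps of None \<Rightarrow> afollow nb2 ap2 b ps = None
     | Some x \<Rightarrow> (\<exists>y. afollow nb2 ap2 b ps = Some y \<and> R (t - length ps) x y))"
proof (induction ps arbitrary: t a b)
  case Nil
  then show ?case by simp
next
  case (Cons pq ps)
  obtain p q where pq: "pq = (p, q)" by force
  have Rt: "R t a b" and len: "Suc (length ps) \<le> t" using Cons by auto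
  note h = H[OF Rt]
  show ?case
  proof (cases "nb1 a p")
    case None
    then have "nb2 b p = None" using h by auto
    then show ?thesis using None pq by auto
  next
    case (Some a')
    have "nb2 b p \<noteq> None" using h Some by (metis option.distinct(1))
    then obtain b' where b': "nb2 b p = Some b'" by blast
    have e: "ap1 a' a = ap2 b' b" and R': "R (t - 1) a' b'" using h Some b' len by auto
    have IH: "case afollow nb1 ap1 a' ps of None \<Rightarrow> afollow nb2 ap2 b' ps = None
     | Some x \<Rightarrow> (\<exists>y. afollow nb2 ap2 b' ps = Some y \<and> R (t - 1 - length ps) x y)"
      using Cons.IH[OF R'] len by auto
    show ?thesis using IH Some b' e pq by (auto split: option.splits)
  qed
qed

lemma bisim_aview:
  assumes H: "\<And>t a b. R t a b \<Longrightarrow> ad1 a = ad2 b \<and> (\<forall>p. (nb1 a p = None \<longleftrightarrow> nb2 b p = None)) \<and>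
      (0 < t \<longrightarrow> (\<forall>p a' b'. nb1 a p = Some a' \<longrightarrow> nb2 b p = Some b' \<longrightarrow> ap1 a' a = ap2 b' b \<and> R (t - 1) a' b'))"
  and R: "R t a b"
  shows "aview nb1 ad1 ap1 t a = aview nb2 ad2 ap2 t b"
proof -
  have "length ps \<le> t \<Longrightarrow> afollow nb1 ap1 a ps = Some x \<Longrightarrow> \<exists>y. afollow nb2 ap2 b ps = Some y \<and> ad1 x = ad2 y" for ps x
    using bisim_follow[of R ad1 ad2 nb1 nb2 ap1 ap2, OF H R] H by fastforce
  moreover have "length ps \<le> t \<Longrightarrow> afollow nb2 ap2 b ps = Some y \<Longrightarrow> \<exists>x. afollow nb1 ap1 a ps = Some x \<and> ad1 x = ad2 y" for ps y
    using bisim_follow[of R ad1 ad2 nb1 nb2 ap1 ap2, OF H R, of ps] H by (fastforce split: option.splits)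
  ultimately show ?thesis unfolding aview_def by (auto; metis)
qed

lemma aview_restrict: "t \<le> t' \<Longrightarrow> aview nb ad ap t a = {x \<in> aview nb ad ap t' a. length (fst x) \<le> t}"
  unfolding aview_def by auto

lemma view_restrict: "t \<le> t' \<Longrightarrow> view_trunc G t a = {x \<in> view_trunc G t' a. length (fst x) \<le> t}"
  unfolding view_trunc_def by auto

definition enc_of :: "'a set \<Rightarrow> 'a \<Rightarrow> nat" where
  "enc_of S = (SOME h. bij_betw h S {..<card S})"

definition mkG :: "'a set \<Rightarrow> ('a \<Rightarrow> nat \<Rightarrow> 'a option) \<Rightarrow> ('a \<Rightarrow> 'a \<Rightarrow> nat) \<Rightarrow> pgraph" where
  "mkG S nb ap = \<lparr>pg_n = card S,
     pg_adj = (\<lambda>u v. u < card S \<and> v < card S \<and> (\<exists>p. nb (inv_into S (enc_of S) u) p = Some (inv_into S (enc_of S) v))),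
     pg_port = (\<lambda>u v. ap (inv_into S (enc_of S) u) (inv_into S (enc_of S) v))\<rparr>"

locale absg =
  fixes S :: "'a set" and nb :: "'a \<Rightarrow> nat \<Rightarrow> 'a option" and ad :: "'a \<Rightarrow> nat"
    and ap :: "'a \<Rightarrow> 'a \<Rightarrow> nat" and r :: 'a
  assumes fin: "finite S" and rS: "r \<in> S"
    and nb_None: "a \<in> S \<Longrightarrow> nb a p = None \<longleftrightarrow> ad a \<le> p"
    and nb_S: "a \<in> S \<Longrightarrow> nb a p = Some b \<Longrightarrow> b \<in> S"
    and nb_port: "a \<in> S \<Longrightarrow> nb a p = Some b \<Longrightarrow> ap a b = p"
    and nb_back: "a \<in> S \<Longrightarrow> nb a p = Some b \<Longrightarrow> nb b (ap b a) = Some a"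
    and nb_irr: "a \<in> S \<Longrightarrow> nb a p = Some b \<Longrightarrow> b \<noteq> a"
    and conn: "a \<in> S \<Longrightarrow> (a, r) \<in> {(x, y). x \<in> S \<and> (\<exists>p. nb x p = Some y)}\<^sup>*"
begin

abbreviation "enc \<equiv> enc_of S"
abbreviation "dec \<equiv> inv_into S (enc_of S)"
abbreviation "G \<equiv> mkG S nb ap"
abbreviation "E \<equiv> {(x, y). x \<in> S \<and> (\<exists>p. nb x p = Some y)}"

lemma enc_bij: "bij_betw enc S {..<card S}"
proof -
  have "\<exists>h. bij_betw h S {..<card S}" using ex_bij_betw_finite_nat[OF fin] by (simp add: atLeast0LessThan)
  then show ?thesis unfolding enc_of_def by (rule someI_ex)
qed

lemma dec_enc[simp]: "a \<in> S \<Longrightarrow> dec (enc a) = a"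
  using enc_bij by (simp add: bij_betw_def)

lemma enc_lt[simp]: "a \<in> S \<Longrightarrow> enc a < card S"
  using enc_bij by (auto simp: bij_betw_def)

lemma dec_S[simp]: "v < card S \<Longrightarrow> dec v \<in> S"
  using enc_bij by (metis bij_betw_def inv_into_into lessThan_iff)

lemma enc_dec[simp]: "v < card S \<Longrightarrow> enc (dec v) = v"
  using enc_bij by (metis bij_betw_def f_inv_into_f lessThan_iff)

lemma enc_inj: "a \<in> S \<Longrightarrow> b \<in> S \<Longrightarrow> enc a = enc b \<longleftrightarrow> a = b"
  using enc_bij by (metis dec_enc)

lemma G_n[simp]: "pg_n G = card S" by (simp add: mkG_def)

lemma G_adj: "pg_adj G u v \<longleftrightarrow> u < card S \<and> v < card S \<and> (\<exists>p. nb (dec u) p = Some (dec v))"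
  by (simp add: mkG_def)

lemma G_port: "pg_port G u v = ap (dec u) (dec v)"
  by (simp add: mkG_def)

lemma nb_lt: "a \<in> S \<Longrightarrow> nb a p = Some b \<Longrightarrow> p < ad a"
  using nb_None by (metis not_le option.distinct(1))

lemma nb_ex: "a \<in> S \<Longrightarrow> p < ad a \<Longrightarrow> \<exists>b. nb a p = Some b"
  using nb_None by (metis not_le option.exhaust)

lemma nbr_set: assumes a: "a \<in> S" shows "{b. \<exists>p. nb a p = Some b} = (\<lambda>p. the (nb a p)) ` {..<ad a}"
proof (rule set_eqI, rule iffI)
  fix b assume "b \<in> {b. \<exists>p. nb a p = Some b}"
  then obtain p where "nb a p = Some b" by blast
  then show "b \<in> (\<lambda>p. the (nb a p)) ` {..<ad a}" using nb_lt[OF a] by force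
next
  fix b assume "b \<in> (\<lambda>p. the (nb a p)) ` {..<ad a}"
  then obtain p where "p < ad a" "b = the (nb a p)" by auto
  then show "b \<in> {b. \<exists>p. nb a p = Some b}" using nb_ex[OF a] by force
qed

lemma card_nbr: "a \<in> S \<Longrightarrow> card {b. \<exists>p. nb a p = Some b} = ad a"
proof -
  assume a: "a \<in> S"
  have "inj_on (\<lambda>p. the (nb a p)) {..<ad a}"
  proof (rule inj_onI)
    fix p p' assume "p \<in> {..<ad a}" "p' \<in> {..<ad a}" "the (nb a p) = the (nb a p')"
    then show "p = p'" using nb_ex[OF a] nb_port[OF a] by (metis lessThan_iff option.sel)
  qed
  then show ?thesis using nbr_set[OF a] by (simp add: card_image)
qed

lemma G_deg: "v < card S \<Longrightarrow> deg G v = ad (dec v)"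
proof -
  assume v: "v < card S"
  have "{u. u < pg_n G \<and> pg_adj G v u} = enc ` {b. \<exists>p. nb (dec v) p = Some b}"
  proof safe
    fix u assume "u < pg_n G" "pg_adj G v u"
    then show "u \<in> enc ` {b. \<exists>p. nb (dec v) p = Some b}" by (auto simp: G_adj intro!: image_eqI[of _ _ "dec u"])
  next
    fix b p assume "nb (dec v) p = Some b"
    then show "enc b < pg_n G" "pg_adj G v (enc b)" using v nb_S[of "dec v"] by (auto simp: G_adj)
  qed
  moreover have "inj_on enc {b. \<exists>p. nb (dec v) p = Some b}"
    using v nb_S[of "dec v"] by (auto intro!: inj_onI simp: enc_inj)
  ultimately show ?thesis unfolding deg_def using card_nbr[of "dec v"] v by (simp add: card_image)
qed

lemma G_nbr: "v < card S \<Longrightarrow> nbr G v p = map_option enc (nb (dec v) p)"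
proof (cases "nb (dec v) p")
  case None
  assume v: "v < card S"
  have "\<not> (\<exists>u. pg_adj G v u \<and> pg_port G v u = p)"
  proof
    assume "\<exists>u. pg_adj G v u \<and> pg_port G v u = p"
    then obtain u p' where "u < card S" "nb (dec v) p' = Some (dec u)" "ap (dec v) (dec u) = p"
      by (auto simp: G_adj G_port)
    then show False using None nb_port[of "dec v"] v by auto
  qed
  then show ?thesis unfolding nbr_def using None by simp
next
  case (Some b)
  assume v: "v < card S"
  have bS: "b \<in> S" using nb_S[OF dec_S[OF v] Some] .
  have P: "pg_adj G v (enc b) \<and> pg_port G v (enc b) = p"
    using Some v bS nb_port[of "dec v"] by (auto simp: G_adj G_port)
  have U: "\<And>u. pg_adj G v u \<and> pg_port G v u = p \<Longrightarrow> u = enc b"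
  proof -
    fix u assume "pg_adj G v u \<and> pg_port G v u = p"
    then obtain p' where u: "u < card S" "nb (dec v) p' = Some (dec u)" "ap (dec v) (dec u) = p"
      by (auto simp: G_adj G_port)
    then have "p' = p" using nb_port[of "dec v"] v by auto
    then have "dec u = b" using u Some by simp
    then show "u = enc b" using u by auto
  qed
  have "(THE u. pg_adj G v u \<and> pg_port G v u = p) = enc b"
    using P U by (rule the_equality)
  then show ?thesis unfolding nbr_def using P Some by auto
qed

lemma afollow_S: "a \<in> S \<Longrightarrow> afollow nb ap a ps = Some x \<Longrightarrow> x \<in> S"
proof (induction ps arbitrary: a)
  case Nil then show ?case by simp
next
  case (Cons pq ps)
  then show ?case by (cases pq) (auto split: option.splits if_splits dest: nb_S)
qed

lemma G_follow: "v < card S \<Longrightarrow> follow G v ps = map_option enc (afollow nb ap (dec v) ps)"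
proof (induction ps arbitrary: v)
  case Nil
  then show ?case by simp
next
  case (Cons pq ps)
  obtain p q where pq: "pq = (p, q)" by force
  show ?case
  proof (cases "nb (dec v) p")
    case None
    then show ?thesis using Cons pq by (simp add: G_nbr)
  next
    case (Some b)
    have bS: "b \<in> S" using nb_S[OF dec_S[OF Cons.prems] Some] .
    then show ?thesis using Cons pq Some by (simp add: G_nbr G_port)
  qed
qed

lemma G_view: "v < card S \<Longrightarrow> view_trunc G t v = aview nb ad ap t (dec v)"
proof -
  assume v: "v < card S"
  show ?thesis unfolding view_trunc_def aview_def
  proof safe
    fix ps w assume "length ps \<le> t" "follow G v ps = Some w"
    then show "\<exists>ps' x. (ps, deg G w) = (ps', ad x) \<and> length ps' \<le> t \<and> afollow nb ap (dec v) ps' = Some x"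
      using v G_follow[OF v] afollow_S[of "dec v"] by (auto simp: G_deg)
  next
    fix ps x assume "length ps \<le> t" "afollow nb ap (dec v) ps = Some x"
    then show "\<exists>ps' w. (ps, ad x) = (ps', deg G w) \<and> length ps' \<le> t \<and> follow G v ps' = Some w"
      using v G_follow[OF v] afollow_S[of "dec v"] by (auto simp: G_deg intro!: exI[of _ "enc x"])
  qed
qed

lemma E_sym: "(x, y) \<in> E \<Longrightarrow> (y, x) \<in> E"
proof -
  assume "(x, y) \<in> E"
  then obtain p where x: "x \<in> S" and p: "nb x p = Some y" by blast
  have "y \<in> S" using nb_S[OF x p] .
  moreover have "nb y (ap y x) = Some x" using nb_back[OF x p] .
  ultimately show ?thesis by blast
qed

lemma conn2: "a \<in> S \<Longrightarrow> b \<in> S \<Longrightarrow> (a, b) \<in> E\<^sup>*"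
proof -
  assume a: "a \<in> S" and b: "b \<in> S"
  have "(b, r) \<in> E\<^sup>*" using conn[OF b] .
  then have "(r, b) \<in> (E\<inverse>)\<^sup>*" by (simp add: rtrancl_converse)
  moreover have "E\<inverse> = E" using E_sym by blast
  ultimately have "(r, b) \<in> E\<^sup>*" by simp
  then show ?thesis using conn[OF a] by (meson rtrancl_trans)
qed

lemma E_G: "(x, y) \<in> E\<^sup>* \<Longrightarrow> y \<in> S \<Longrightarrow> (enc x, enc y) \<in> {(a, b). pg_adj G a b}\<^sup>*"
proof (induction rule: converse_rtrancl_induct)
  case base then show ?case by simp
next
  case (step x z)
  then obtain p where x: "x \<in> S" and p: "nb x p = Some z" by blast
  have zS: "z \<in> S" using nb_S[OF x p] .
  have "pg_adj G (enc x) (enc z)" using x zS p by (auto simp: G_adj)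
  then show ?case using step by (meson case_prodI converse_rtrancl_into_rtrancl mem_Collect_eq)
qed

lemma G_wf: "wf_pgraph G"
  unfolding wf_pgraph_def
proof (intro conjI allI impI)
  have "card S > 0" using rS fin card_gt_0_iff by blast
  then show "1 \<le> pg_n G" by simp
next
  fix u v assume "pg_adj G u v" then show "u < pg_n G" "v < pg_n G" by (auto simp: G_adj)
next
  fix u v assume "pg_adj G u v"
  then obtain p where u: "u < card S" and v: "v < card S" and p: "nb (dec u) p = Some (dec v)" by (auto simp: G_adj)
  have "nb (dec v) (ap (dec v) (dec u)) = Some (dec u)" using nb_back[OF dec_S[OF u] p] .
  then show "pg_adj G v u" using u v by (auto simp: G_adj)
next
  fix v show "\<not> pg_adj G v v"
  proof
    assume "pg_adj G v v"
    then obtain p where v: "v < card S" and p: "nb (dec v) p = Some (dec v)" by (auto simp: G_adj)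
    show False using nb_irr[OF dec_S[OF v] p] by simp
  qed
next
  fix u v assume u: "u < pg_n G" and v: "v < pg_n G"
  have "(dec u, dec v) \<in> E\<^sup>*" using conn2 u v by simp
  from E_G[OF this] show "(u, v) \<in> {(a, b). pg_adj G a b}\<^sup>*" using u v by simp
next
  fix v assume v: "v < pg_n G"
  then have vS: "dec v \<in> S" by simp
  show "bij_betw (pg_port G v) {u. pg_adj G v u} {0..<deg G v}"
    unfolding bij_betw_def
  proof
    show "inj_on (pg_port G v) {u. pg_adj G v u}"
    proof (rule inj_onI)
      fix x y assume "x \<in> {u. pg_adj G v u}" "y \<in> {u. pg_adj G v u}" and e: "pg_port G v x = pg_port G v y"
      then obtain p p' where x: "x < card S" and y: "y < card S" and p: "nb (dec v) p = Some (dec x)"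
        and p': "nb (dec v) p' = Some (dec y)" by (auto simp: G_adj)
      have "p = p'" using e nb_port[OF vS p] nb_port[OF vS p'] by (simp add: G_port)
      then have "dec x = dec y" using p p' by simp
      then show "x = y" using x y by (metis enc_dec)
    qed
  next
    show "pg_port G v ` {u. pg_adj G v u} = {0..<deg G v}"
    proof (rule set_eqI, rule iffI)
      fix q assume "q \<in> pg_port G v ` {u. pg_adj G v u}"
      then obtain u where "pg_adj G v u" and q: "q = pg_port G v u" by blast
      then obtain p where "nb (dec v) p = Some (dec u)" "u < card S" by (auto simp: G_adj)
      then show "q \<in> {0..<deg G v}" using v q nb_port[OF vS] nb_lt[OF vS] by (auto simp: G_port G_deg)
    next
      fix p assume "p \<in> {0..<deg G v}"
      then obtain b where b: "nb (dec v) p = Some b" using nb_ex[OF vS] v by (auto simp: G_deg)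
      then have bS: "b \<in> S" using nb_S[OF vS] by blast
      have "pg_adj G v (enc b)" using b bS v by (auto simp: G_adj)
      moreover have "pg_port G v (enc b) = p" using b bS nb_port[OF vS b] by (simp add: G_port)
      ultimately show "p \<in> pg_port G v ` {u. pg_adj G v u}" by force
    qed
  qed
qed

lemma G_maxdeg: "maxdeg G = Max (ad ` S)"
proof -
  have "deg G ` {..<pg_n G} = ad ` S"
  proof (rule set_eqI, rule iffI)
    fix d assume "d \<in> deg G ` {..<pg_n G}" then show "d \<in> ad ` S" by (auto simp: G_deg)
  next
    fix d assume "d \<in> ad ` S"
    then obtain a where a: "a \<in> S" "d = ad a" by blast
    then have "deg G (enc a) = d" by (simp add: G_deg)
    moreover have "enc a \<in> {..<pg_n G}" using a by simp
    ultimately show "d \<in> deg G ` {..<pg_n G}" by (metis imageI)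
  qed
  then show ?thesis unfolding maxdeg_def by simp
qed

end

context absg begin

lemma path_ex: "(a, x) \<in> E\<^sup>* \<Longrightarrow> \<exists>qs. afollow nb ap a qs = Some x"
proof (induction rule: converse_rtrancl_induct)
  case base
  then show ?case by (rule exI[of _ "[]"]) simp
next
  case (step y z)
  then obtain p where p: "nb y p = Some z" by blast
  obtain qs where "afollow nb ap z qs = Some x" using step by blast
  then have "afollow nb ap y ((p, ap z y) # qs) = Some x" using p by simp
  then show ?case by blast
qed

lemma afollow_inj: "a \<in> S \<Longrightarrow> b \<in> S \<Longrightarrow> afollow nb ap a qs = Some x \<Longrightarrow> afollow nb ap b qs = Some x \<Longrightarrow> a = b"
proof (induction qs arbitrary: a b)
  case Nil
  then show ?case by simp
next
  case (Cons pq qs)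
  obtain p q where pq: "pq = (p, q)" by force
  obtain a' where a': "nb a p = Some a'" "ap a' a = q" "afollow nb ap a' qs = Some x"
    using Cons.prems pq by (auto split: option.splits if_splits)
  obtain b' where b': "nb b p = Some b'" "ap b' b = q" "afollow nb ap b' qs = Some x"
    using Cons.prems pq by (auto split: option.splits if_splits)
  have "a' \<in> S" "b' \<in> S" using nb_S Cons.prems a' b' by auto
  then have "a' = b'" using Cons.IH a' b' by blast
  then have "nb a' q = Some a" "nb a' q = Some b" using nb_back[OF \<open>a \<in> S\<close> a'(1)] nb_back[OF \<open>b \<in> S\<close> b'(1)] a' b' by auto
  then show ?case by simp
qed

lemma aview_append:
  assumes "afollow nb ap a qs = Some y"
  shows "(qs @ rs, d) \<in> aview nb ad ap (length qs + K) a \<longleftrightarrow> (rs, d) \<in> aview nb ad ap K y"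
  unfolding aview_def using assms by (auto simp: afollow_append)

lemma feas:
  assumes xS: "x \<in> S" and U: "\<forall>a\<in>S. a \<noteq> x \<longrightarrow> aview nb ad ap K a \<noteq> aview nb ad ap K x"
  shows "feasible G"
  unfolding feasible_def
proof (intro allI impI)
  fix u v assume u: "u < pg_n G" and v: "v < pg_n G" and uv: "u \<noteq> v"
  let ?a = "dec u" and ?b = "dec v"
  have aS: "?a \<in> S" and bS: "?b \<in> S" using u v by auto
  have ab: "?a \<noteq> ?b" using u v uv by (metis G_n enc_dec)
  obtain qs where qs: "afollow nb ap ?a qs = Some x" using path_ex conn2[OF aS xS] by blast
  let ?t = "length qs + K"
  have "aview nb ad ap ?t ?a \<noteq> aview nb ad ap ?t ?b"
  proof
    assume eq: "aview nb ad ap ?t ?a = aview nb ad ap ?t ?b"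
    have "(qs, ad x) \<in> aview nb ad ap ?t ?a" unfolding aview_def using qs by auto
    then have "(qs, ad x) \<in> aview nb ad ap ?t ?b" using eq by simp
    then obtain y where y: "afollow nb ap ?b qs = Some y" unfolding aview_def by auto
    have yS: "y \<in> S" using afollow_S[OF bS y] .
    have "aview nb ad ap K y = aview nb ad ap K x"
    proof (rule set_eqI)
      fix z :: "(nat \<times> nat) list \<times> nat"
      obtain rs d where z: "z = (rs, d)" by force
      have "(rs, d) \<in> aview nb ad ap K y \<longleftrightarrow> (qs @ rs, d) \<in> aview nb ad ap ?t ?b" using aview_append[OF y] by simp
      also have "\<dots> \<longleftrightarrow> (qs @ rs, d) \<in> aview nb ad ap ?t ?a" using eq by simp
      also have "\<dots> \<longleftrightarrow> (rs, d) \<in> aview nb ad ap K x" using aview_append[OF qs] by simp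
      finally show "z \<in> aview nb ad ap K y \<longleftrightarrow> z \<in> aview nb ad ap K x" using z by simp
    qed
    then have "y = x" using U yS by blast
    then show False using afollow_inj[OF aS bS qs] y ab by simp
  qed
  then show "\<exists>t. view_trunc G t u \<noteq> view_trunc G t v" using u v by (auto simp: G_view)
qed

lemma selidx:
  assumes xS: "x \<in> S" and U: "\<forall>a\<in>S. a \<noteq> x \<longrightarrow> aview nb ad ap K a \<noteq> aview nb ad ap K x"
    and T: "\<forall>a\<in>S. \<exists>b\<in>S. b \<noteq> a \<and> aview nb ad ap (K - 1) b = aview nb ad ap (K - 1) a"
    and K: "K \<ge> 1"
  shows "selection_index G = K"
  unfolding selection_index_def
proof (rule Least_equality)
  define f where "f = (\<lambda>V. V = view_trunc G K (enc x))"
  have ex: "enc x < card S" using xS by simp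
  have "{v. v < pg_n G \<and> f (view_trunc G K v)} = {enc x}"
  proof (rule set_eqI, rule iffI)
    fix v assume "v \<in> {v. v < pg_n G \<and> f (view_trunc G K v)}"
    then have v: "v < card S" and e: "view_trunc G K v = view_trunc G K (enc x)" unfolding f_def by auto
    have "aview nb ad ap K (dec v) = aview nb ad ap K x"
      using e G_view[OF v, of K] G_view[OF ex, of K] dec_enc[OF xS] by simp
    then have "dec v = x" using U dec_S[OF v] by blast
    then show "v \<in> {enc x}" using enc_dec[OF v] by simp
  next
    fix v assume "v \<in> {enc x}" then show "v \<in> {v. v < pg_n G \<and> f (view_trunc G K v)}" 
      using ex unfolding f_def by simp
  qed
  then have "card {v. v < pg_n G \<and> f (view_trunc G K v)} = 1" by simp
  then show "\<exists>f. card {v. v < pg_n G \<and> f (view_trunc G K v)} = 1" by blast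
next
  fix t assume "\<exists>f. card {v. v < pg_n G \<and> f (view_trunc G t v)} = 1"
  then obtain f where "card {v. v < pg_n G \<and> f (view_trunc G t v)} = 1" by blast
  then obtain v where V: "{v. v < pg_n G \<and> f (view_trunc G t v)} = {v}" by (rule card_1_singletonE)
  then have v: "v < card S" and fv: "f (view_trunc G t v)" by auto
  show "K \<le> t"
  proof (rule ccontr)
    assume "\<not> K \<le> t"
    then have tK: "t \<le> K - 1" by simp
    obtain b where bS: "b \<in> S" and bne: "b \<noteq> dec v" and be: "aview nb ad ap (K - 1) b = aview nb ad ap (K - 1) (dec v)"
      using T dec_S[OF v] by blast
    have "aview nb ad ap t b = aview nb ad ap t (dec v)"
      using be aview_restrict[OF tK, of nb ad ap b] aview_restrict[OF tK, of nb ad ap "dec v"] by simp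
    moreover have eb: "enc b < card S" using bS by simp
    ultimately have "view_trunc G t (enc b) = view_trunc G t v"
      using G_view[OF v, of t] G_view[OF eb, of t] dec_enc[OF bS] by simp
    then have "enc b \<in> {v. v < pg_n G \<and> f (view_trunc G t v)}" using fv eb by simp
    then have "enc b = v" using V by blast
    then show False using bne dec_enc[OF bS] by auto
  qed
qed

end

lemma sel_eq:
  assumes eq: "view_trunc G T u = view_trunc H T w" and t0: "t0 \<le> T"
    and st: "A s (view_trunc G t0 u) \<noteq> None" and oG: "Orc G = s" and oH: "Orc H = s"
  shows "sel_output A Orc G u = sel_output A Orc H w"
proof -
  have V: "view_trunc G t u = view_trunc H t w" if tle: "t \<le> T" for t
    using view_restrict[OF tle, of G u] view_restrict[OF tle, of H w] eq by simp
  let ?PG = "\<lambda>t. A s (view_trunc G t u) \<noteq> None" and ?PH = "\<lambda>t. A s (view_trunc H t w) \<noteq> None"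
  define m where "m = (LEAST t. ?PG t)"
  have mle: "m \<le> t0" unfolding m_def using st by (rule Least_le)
  have Pm: "?PG m" unfolding m_def using st by (rule LeastI)
  have "(LEAST t. ?PH t) = m"
  proof (rule Least_equality)
    show "?PH m" using Pm V[of m] mle t0 by simp
  next
    fix y assume Py: "?PH y"
    show "m \<le> y"
    proof (rule ccontr)
      assume "\<not> m \<le> y"
      then have "y \<le> T" using mle t0 by simp
      then have "?PG y" using Py V[of y] by simp
      then have "m \<le> y" unfolding m_def by (rule Least_le)
      then show False using \<open>\<not> m \<le> y\<close> by simp
    qed
  qed
  then have "stop_round A Orc H w = m" unfolding stop_round_def m_def oH by simp
  moreover have "stop_round A Orc G u = m" unfolding stop_round_def m_def oG by simp
  ultimately show ?thesis unfolding sel_output_def using V[of m] mle t0 oG oH by simp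
qed

lemma leader_unique:
  assumes S: "solves_selection_in A Orc G T"
  shows "\<exists>l<pg_n G. sel_output A Orc G l = Some True \<and> (\<forall>v<pg_n G. v \<noteq> l \<longrightarrow> view_trunc G T v \<noteq> view_trunc G T l)"
proof -
  have "card {v. v < pg_n G \<and> sel_output A Orc G v = Some True} = 1" using S unfolding solves_selection_in_def by blast
  then obtain l where L: "{v. v < pg_n G \<and> sel_output A Orc G v = Some True} = {l}" by (rule card_1_singletonE)
  then have l: "l < pg_n G" "sel_output A Orc G l = Some True" by auto
  obtain t0 where t0: "t0 \<le> T" "A (Orc G) (view_trunc G t0 l) \<noteq> None" using S l unfolding solves_selection_in_def by blast
  have "\<forall>v<pg_n G. v \<noteq> l \<longrightarrow> view_trunc G T v \<noteq> view_trunc G T l"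
  proof (intro allI impI)
    fix v assume v: "v < pg_n G" "v \<noteq> l"
    show "view_trunc G T v \<noteq> view_trunc G T l"
    proof
      assume "view_trunc G T v = view_trunc G T l"
      then have "sel_output A Orc G l = sel_output A Orc G v"
        using sel_eq[of G T l G v t0 A "Orc G" Orc] t0 by simp
      then have "v \<in> {v. v < pg_n G \<and> sel_output A Orc G v = Some True}" using l v by simp
      then show False using L v by blast
    qed
  qed
  then show ?thesis using l by blast
qed

datatype nd = BB nat | TN nat "nat list" | PN nat "nat list" nat

definition tpaths :: "nat \<Rightarrow> nat \<Rightarrow> nat list set" where
  "tpaths k D = {ps. length ps \<le> k \<and> set ps \<subseteq> {..<D}}"
definition leaves :: "nat \<Rightarrow> nat \<Rightarrow> nat list set" where
  "leaves k D = {ps. length ps = k \<and> set ps \<subseteq> {..<D}}"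

definition cS :: "nat \<Rightarrow> nat \<Rightarrow> nat \<Rightarrow> (nat \<Rightarrow> nat list \<Rightarrow> nat) \<Rightarrow> nd set" where
  "cS k D M lab = {BB a | a. a < M} \<union> {TN g ps | g ps. g < M \<and> ps \<in> tpaths k D}
     \<union> {PN g L e | g L e. g < M \<and> L \<in> leaves k D \<and> e < lab g L}"

fun cnb :: "nat \<Rightarrow> nat \<Rightarrow> nat \<Rightarrow> (nat \<Rightarrow> nat list \<Rightarrow> nat) \<Rightarrow> nd \<Rightarrow> nat \<Rightarrow> nd option" where
  "cnb k D M lab (BB a) p = (if p = 0 then Some (BB (Suc a mod M)) else if p = 1 then Some (BB ((a + M - 1) mod M))
      else if p = 2 then Some (TN a []) else None)"
| "cnb k D M lab (TN g ps) p = (if ps = [] then (if p < D then Some (TN g [p]) else if p = D then Some (BB g) else None)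
     else if p = 0 then Some (TN g (tl ps))
     else if length ps < k then (if p \<le> D then Some (TN g ((p - 1) # ps)) else None)
     else (if p \<le> lab g ps then Some (PN g ps (p - 1)) else None))"
| "cnb k D M lab (PN g L e) p = (if p = 0 then Some (TN g L) else None)"

fun cdeg :: "nat \<Rightarrow> nat \<Rightarrow> (nat \<Rightarrow> nat list \<Rightarrow> nat) \<Rightarrow> nd \<Rightarrow> nat" where
  "cdeg k D lab (BB a) = 3"
| "cdeg k D lab (TN g ps) = (if length ps < k then Suc D else Suc (lab g ps))"
| "cdeg k D lab (PN g L e) = 1"

fun cport :: "nat \<Rightarrow> nat \<Rightarrow> nd \<Rightarrow> nd \<Rightarrow> nat" where
  "cport D M (BB a) b = (case b of BB c \<Rightarrow> (if c = Suc a mod M then 0 else 1) | _ \<Rightarrow> 2)"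
| "cport D M (TN g ps) b = (case b of BB _ \<Rightarrow> D
      | TN _ qs \<Rightarrow> (if ps = [] then hd qs else if qs = tl ps then 0 else Suc (hd qs))
      | PN _ _ e \<Rightarrow> Suc e)"
| "cport D M (PN g L e) b = 0"

definition cok :: "nat \<Rightarrow> nat \<Rightarrow> nat \<Rightarrow> (nat \<Rightarrow> nat list \<Rightarrow> nat) \<Rightarrow> bool" where
  "cok k D M lab \<longleftrightarrow> 1 \<le> k \<and> 4 \<le> D \<and> 3 \<le> M \<and> (\<forall>g L. L \<in> leaves k D \<longrightarrow> lab g L \<le> D)"

lemma mod_facts:
  assumes "a < M" "3 \<le> (M::nat)"
  shows "(Suc a mod M + M - 1) mod M = a" "(a + M - 1) mod M \<noteq> Suc a mod M"
    "Suc ((a + M - 1) mod M) mod M = a" "Suc a mod M \<noteq> a" "(a + M - 1) mod M \<noteq> a"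
    "Suc a mod M < M" "(a + M - 1) mod M < M"
proof -
  consider "Suc a = M" | "Suc a < M" using assms by linarith
  then show "(Suc a mod M + M - 1) mod M = a"
  proof cases
    case 1 then show ?thesis using assms by simp
  next
    case 2 then have "Suc a + M - 1 = a + M" by simp
    then show ?thesis using 2 assms by simp
  qed
  consider "a = 0" | "0 < a" by blast
  then have am: "(a + M - 1) mod M = (if a = 0 then M - 1 else a - 1)"
  proof cases
    case 1 then show ?thesis using assms by simp
  next
    case 2 then have e: "a + M - 1 = (a - 1) + M" using assms by simp
    have "(a - 1 + M) mod M = a - 1" using 2 assms by (metis mod_add_self2 mod_less less_imp_diff_less)
    then show ?thesis using 2 e by simp
  qed
  have sm: "Suc a mod M = (if Suc a = M then 0 else Suc a)" using assms by (simp add: mod_if)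
  show "(a + M - 1) mod M \<noteq> Suc a mod M" using am sm assms by auto
  show "Suc ((a + M - 1) mod M) mod M = a" using am assms by (auto simp: mod_if)
  show "Suc a mod M \<noteq> a" using sm assms by auto
  show "(a + M - 1) mod M \<noteq> a" using am assms by auto
  show "Suc a mod M < M" "(a + M - 1) mod M < M" using assms by auto
qed

lemma tpaths_Cons: "c # ps \<in> tpaths k D \<longleftrightarrow> c < D \<and> Suc (length ps) \<le> k \<and> ps \<in> tpaths k D"
  unfolding tpaths_def by auto

lemma tpaths_tl: "ps \<in> tpaths k D \<Longrightarrow> tl ps \<in> tpaths k D"
  unfolding tpaths_def by (cases ps) auto

lemma leaves_tpaths: "L \<in> leaves k D \<Longrightarrow> L \<in> tpaths k D"
  unfolding tpaths_def leaves_def by auto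

lemma tpaths_leaf: "ps \<in> tpaths k D \<Longrightarrow> \<not> length ps < k \<Longrightarrow> ps \<in> leaves k D"
  unfolding tpaths_def leaves_def by auto

lemma cS_BB[simp]: "BB a \<in> cS k D M lab \<longleftrightarrow> a < M" unfolding cS_def by auto
lemma cS_TN[simp]: "TN g ps \<in> cS k D M lab \<longleftrightarrow> g < M \<and> ps \<in> tpaths k D" unfolding cS_def by auto
lemma cS_PN[simp]: "PN g L e \<in> cS k D M lab \<longleftrightarrow> g < M \<and> L \<in> leaves k D \<and> e < lab g L" unfolding cS_def by auto

lemma cS_finite: "finite (cS k D M lab)"
proof -
  have ft: "finite (tpaths k D)" unfolding tpaths_def using finite_lists_length_le[of "{..<D}" k] by (simp add: conj_commute)
  have fl: "finite (leaves k D)" unfolding leaves_def using finite_lists_length_eq[of "{..<D}" k] by (simp add: conj_commute)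
  have "{TN g ps | g ps. g < M \<and> ps \<in> tpaths k D} = (\<lambda>(g, ps). TN g ps) ` ({..<M} \<times> tpaths k D)" by auto
  moreover have sub: "{PN g L e | g L e. g < M \<and> L \<in> leaves k D \<and> e < lab g L} \<subseteq>
     (\<lambda>(g, L, e). PN g L e) ` ({..<M} \<times> leaves k D \<times> {..<Max ((\<lambda>(g, L). lab g L) ` ({..<M} \<times> leaves k D)) + 1})"
  proof
    fix x assume "x \<in> {PN g L e | g L e. g < M \<and> L \<in> leaves k D \<and> e < lab g L}"
    then obtain g L e where x: "x = PN g L e" "g < M" "L \<in> leaves k D" "e < lab g L" by blast
    have "lab g L \<le> Max ((\<lambda>(g, L). lab g L) ` ({..<M} \<times> leaves k D))"
      using x fl by (intro Max_ge) auto
    then show "x \<in> (\<lambda>(g, L, e). PN g L e) ` ({..<M} \<times> leaves k D \<times> {..<Max ((\<lambda>(g, L). lab g L) ` ({..<M} \<times> leaves k D)) + 1})"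
      using x by (auto intro!: image_eqI[of _ _ "(g, L, e)"])
  qed
  moreover have "{BB a | a. a < M} = BB ` {..<M}" by auto
  ultimately have "finite {TN g ps | g ps. g < M \<and> ps \<in> tpaths k D}" "finite {BB a | a. a < M}"
    using ft fl by auto
  moreover have "finite {PN g L e | g L e. g < M \<and> L \<in> leaves k D \<and> e < lab g L}"
    by (rule finite_subset[OF sub]) (intro finite_imageI finite_cartesian_product fl finite_lessThan)
  ultimately show ?thesis unfolding cS_def by blast
qed

context
  fixes k D M :: nat and lab :: "nat \<Rightarrow> nat list \<Rightarrow> nat"
  assumes ok: "cok k D M lab"
begin

lemma okk: "1 \<le> k" and okD: "4 \<le> D" and okM: "3 \<le> M" and oklab: "L \<in> leaves k D \<Longrightarrow> lab g L \<le> D"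
  using ok unfolding cok_def by auto

lemma c_nb_None: "a \<in> cS k D M lab \<Longrightarrow> cnb k D M lab a p = None \<longleftrightarrow> cdeg k D lab a \<le> p"
proof (cases a)
  case (BB x) then show ?thesis by auto
next
  case (TN g ps)
  assume "a \<in> cS k D M lab"
  then show ?thesis using TN okk by (cases "ps = []") auto
next
  case (PN g L e) then show ?thesis by auto
qed

lemma c_nb_S: "a \<in> cS k D M lab \<Longrightarrow> cnb k D M lab a p = Some b \<Longrightarrow> b \<in> cS k D M lab"
proof (cases a)
  case (BB x)
  assume "a \<in> cS k D M lab" "cnb k D M lab a p = Some b"
  then show ?thesis using BB mod_facts[of x M] okM by (auto split: if_splits simp: tpaths_def)
next
  case (TN g ps)
  assume a: "a \<in> cS k D M lab" and b: "cnb k D M lab a p = Some b"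
  then have g: "g < M" and ps: "ps \<in> tpaths k D" using TN by auto
  show ?thesis
  proof (cases "ps = []")
    case True then show ?thesis using TN b g ps okk by (auto split: if_splits simp: tpaths_def)
  next
    case False
    then show ?thesis using TN b g ps okk tpaths_tl[OF ps]
      by (auto split: if_splits simp: tpaths_Cons tpaths_leaf)
  qed
next
  case (PN g L e)
  assume "a \<in> cS k D M lab" "cnb k D M lab a p = Some b"
  then show ?thesis using PN by (auto split: if_splits simp: leaves_tpaths)
qed

lemma c_nb_port: "a \<in> cS k D M lab \<Longrightarrow> cnb k D M lab a p = Some b \<Longrightarrow> cport D M a b = p"
proof (cases a)
  case (BB x)
  assume "a \<in> cS k D M lab" "cnb k D M lab a p = Some b"
  then show ?thesis using BB mod_facts[of x M] okM by (auto split: if_splits)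
next
  case (TN g ps)
  assume a: "a \<in> cS k D M lab" and b: "cnb k D M lab a p = Some b"
  show ?thesis
  proof (cases "ps = []")
    case True then show ?thesis using TN b by (auto split: if_splits)
  next
    case False
    then have "tl ps \<noteq> (p - 1) # ps" by (cases ps) auto
    then show ?thesis using TN b False by (auto split: if_splits)
  qed
next
  case (PN g L e)
  assume "a \<in> cS k D M lab" "cnb k D M lab a p = Some b"
  then show ?thesis using PN by (auto split: if_splits)
qed

lemma c_nb_back: "a \<in> cS k D M lab \<Longrightarrow> cnb k D M lab a p = Some b \<Longrightarrow> cnb k D M lab b (cport D M b a) = Some a"
proof (cases a)
  case (BB x)
  assume "a \<in> cS k D M lab" "cnb k D M lab a p = Some b"
  then show ?thesis using BB mod_facts[of x M] okM by (auto split: if_splits)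
next
  case (TN g ps)
  assume a: "a \<in> cS k D M lab" and b: "cnb k D M lab a p = Some b"
  then have g: "g < M" and ps: "ps \<in> tpaths k D" using TN by auto
  show ?thesis
  proof (cases "ps = []")
    case True then show ?thesis using TN b okk by (auto split: if_splits)
  next
    case False
    then obtain c qs where cqs: "ps = c # qs" by (cases ps) auto
    have "c < D" "length qs < k" using ps cqs by (auto simp: tpaths_def)
    then show ?thesis using TN b cqs
      by (cases qs) (auto split: if_splits)
  qed
next
  case (PN g L e)
  assume a: "a \<in> cS k D M lab" "cnb k D M lab a p = Some b"
  then have "L \<in> leaves k D" "e < lab g L" using PN by auto
  then have "L \<noteq> []" "\<not> length L < k" using okk by (auto simp: leaves_def)
  then show ?thesis using PN a by (auto split: if_splits)
qed

lemma c_nb_irr: "a \<in> cS k D M lab \<Longrightarrow> cnb k D M lab a p = Some b \<Longrightarrow> b \<noteq> a"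
proof (cases a)
  case (BB x)
  assume "a \<in> cS k D M lab" "cnb k D M lab a p = Some b"
  then show ?thesis using BB mod_facts[of x M] okM by (auto split: if_splits)
next
  case (TN g ps)
  assume "cnb k D M lab a p = Some b"
  then show ?thesis using TN by (cases ps) (auto split: if_splits)
next
  case (PN g L e)
  assume "cnb k D M lab a p = Some b"
  then show ?thesis using PN by (auto split: if_splits)
qed

abbreviation "cE \<equiv> {(x, y). x \<in> cS k D M lab \<and> (\<exists>p. cnb k D M lab x p = Some y)}"

lemma conn_BB: "a < M \<Longrightarrow> (BB a, BB 0) \<in> cE\<^sup>*"
proof (induction a)
  case 0 then show ?case by simp
next
  case (Suc a)
  have "cnb k D M lab (BB (Suc a)) 1 = Some (BB a)"
    using Suc.prems by simp
  moreover have "BB (Suc a) \<in> cS k D M lab" using Suc.prems by simp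
  ultimately have "(BB (Suc a), BB a) \<in> cE" by blast
  then show ?case using Suc by (meson Suc_lessD converse_rtrancl_into_rtrancl)
qed

lemma conn_TN: "g < M \<Longrightarrow> ps \<in> tpaths k D \<Longrightarrow> (TN g ps, BB 0) \<in> cE\<^sup>*"
proof (induction ps)
  case Nil
  have "cnb k D M lab (TN g []) D = Some (BB g)" by simp
  then have "(TN g [], BB g) \<in> cE" using Nil by auto
  then show ?case using conn_BB[OF Nil(1)] by (meson converse_rtrancl_into_rtrancl)
next
  case (Cons c ps)
  have "cnb k D M lab (TN g (c # ps)) 0 = Some (TN g ps)" by simp
  then have "(TN g (c # ps), TN g ps) \<in> cE" using Cons by auto
  moreover have "ps \<in> tpaths k D" using Cons.prems by (simp add: tpaths_Cons)
  ultimately show ?case using Cons by (meson converse_rtrancl_into_rtrancl)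
qed

lemma c_conn: "a \<in> cS k D M lab \<Longrightarrow> (a, BB 0) \<in> cE\<^sup>*"
proof (cases a)
  case (BB x) assume "a \<in> cS k D M lab" then show ?thesis using BB conn_BB by simp
next
  case (TN g ps) assume "a \<in> cS k D M lab" then show ?thesis using TN conn_TN by simp
next
  case (PN g L e)
  assume a: "a \<in> cS k D M lab"
  have "cnb k D M lab (PN g L e) 0 = Some (TN g L)" by simp
  then have "(a, TN g L) \<in> cE" using a PN by auto
  moreover have "(TN g L, BB 0) \<in> cE\<^sup>*" using a PN conn_TN leaves_tpaths by auto
  ultimately show ?thesis by (meson converse_rtrancl_into_rtrancl)
qed

lemma c_absg: "absg (cS k D M lab) (cnb k D M lab) (cdeg k D lab) (cport D M) (BB 0)"
  unfolding absg_def
  using cS_finite c_nb_None c_nb_S c_nb_port c_nb_back c_nb_irr c_conn okM by auto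

end

lemma mod_fact2: "x < M \<Longrightarrow> 3 \<le> (M::nat) \<Longrightarrow> Suc (Suc x mod M) mod M \<noteq> x"
proof -
  assume x: "x < M" and M: "3 \<le> M"
  consider "Suc x = M" | "Suc (Suc x) = M" | "Suc (Suc x) < M" using x by linarith
  then show ?thesis
  proof cases
    case 1 then show ?thesis using M by auto
  next
    case 2 then have "Suc x mod M = Suc x" by simp
    then show ?thesis using 2 M by simp
  next
    case 3 then show ?thesis by simp
  qed
qed

definition bag :: "nat \<Rightarrow> nat \<Rightarrow> (nat \<Rightarrow> nat list \<Rightarrow> nat) \<Rightarrow> (nat \<Rightarrow> nat list \<Rightarrow> nat) \<Rightarrow> nat \<Rightarrow> nat \<Rightarrow> nat \<Rightarrow> bool" where
  "bag k D lab1 lab2 g g' b \<longleftrightarrow> (\<forall>L\<in>leaves k D. last L = b \<longrightarrow> lab1 g L = lab2 g' L)"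

definition fag :: "nat \<Rightarrow> nat \<Rightarrow> (nat \<Rightarrow> nat list \<Rightarrow> nat) \<Rightarrow> (nat \<Rightarrow> nat list \<Rightarrow> nat) \<Rightarrow> nat \<Rightarrow> nat \<Rightarrow> bool" where
  "fag k D lab1 lab2 g g' \<longleftrightarrow> (\<forall>L\<in>leaves k D. lab1 g L = lab2 g' L)"

definition Rl :: "nat \<Rightarrow> nat \<Rightarrow> nat \<Rightarrow> (nat \<Rightarrow> nat list \<Rightarrow> nat) \<Rightarrow> (nat \<Rightarrow> nat list \<Rightarrow> nat) \<Rightarrow> nat \<Rightarrow> nd \<Rightarrow> nd \<Rightarrow> bool" where
  "Rl k D M lab1 lab2 t a b \<longleftrightarrow> t \<le> k \<and> a \<in> cS k D M lab1 \<and> b \<in> cS k D M lab2 \<and>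
    (case a of BB _ \<Rightarrow> (case b of BB _ \<Rightarrow> True | _ \<Rightarrow> False)
     | TN g ps \<Rightarrow> (case b of TN g' ps' \<Rightarrow> ps' = ps \<and>
          (length ps + t < k \<or> (ps \<noteq> [] \<and> bag k D lab1 lab2 g g' (last ps)) \<or> fag k D lab1 lab2 g g') | _ \<Rightarrow> False)
     | PN g L e \<Rightarrow> (case b of PN g' L' e' \<Rightarrow> L' = L \<and> e' = e \<and> bag k D lab1 lab2 g g' (last L) | _ \<Rightarrow> False))"

lemma fag_bag: "fag k D lab1 lab2 g g' \<Longrightarrow> bag k D lab1 lab2 g g' b"
  unfolding fag_def bag_def by auto

context
  fixes k D M :: nat and lab1 lab2 :: "nat \<Rightarrow> nat list \<Rightarrow> nat"
  assumes ok1: "cok k D M lab1" and ok2: "cok k D M lab2"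
begin

abbreviation "R \<equiv> Rl k D M lab1 lab2"
abbreviation "nb1 \<equiv> cnb k D M lab1"
abbreviation "nb2 \<equiv> cnb k D M lab2"

lemma kk: "1 \<le> k" and DD: "4 \<le> D" and MM: "3 \<le> M" using ok1 unfolding cok_def by auto

lemma R_deg: "R t a b \<Longrightarrow> cdeg k D lab1 a = cdeg k D lab2 b"
proof -
  assume r: "R t a b"
  show ?thesis
  proof (cases a)
    case (BB x) then show ?thesis using r by (cases b) (auto simp: Rl_def)
  next
    case (TN g ps)
    then obtain g' where b: "b = TN g' ps" and C: "length ps + t < k \<or> (ps \<noteq> [] \<and> bag k D lab1 lab2 g g' (last ps)) \<or> fag k D lab1 lab2 g g'"
      and ps: "ps \<in> tpaths k D" and tk: "t \<le> k"
      using r by (cases b) (auto simp: Rl_def)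
    show ?thesis
    proof (cases "length ps < k")
      case True then show ?thesis using TN b by simp
    next
      case False
      then have L: "ps \<in> leaves k D" using ps tpaths_leaf by blast
      have "bag k D lab1 lab2 g g' (last ps)" using C False fag_bag by auto
      then have "lab1 g ps = lab2 g' ps" using L unfolding bag_def by blast
      then show ?thesis using TN b by simp
    qed
  next
    case (PN g L e) then show ?thesis using r by (cases b) (auto simp: Rl_def)
  qed
qed

lemma R_None: "R t a b \<Longrightarrow> (nb1 a p = None \<longleftrightarrow> nb2 b p = None)"
proof -
  assume r: "R t a b"
  then have "a \<in> cS k D M lab1" "b \<in> cS k D M lab2" by (auto simp: Rl_def)
  then show ?thesis using c_nb_None[OF ok1] c_nb_None[OF ok2] R_deg[OF r] by simp
qed

lemma R_step:
  assumes r: "R t a b" and t: "0 < t" and a': "nb1 a p = Some a'" and b': "nb2 b p = Some b'"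
  shows "cport D M a' a = cport D M b' b \<and> R (t - 1) a' b'"
proof -
  have aS: "a \<in> cS k D M lab1" and bS: "b \<in> cS k D M lab2" and tk: "t \<le> k" using r by (auto simp: Rl_def)
  have a'S: "a' \<in> cS k D M lab1" using c_nb_S[OF ok1 aS a'] .
  have b'S: "b' \<in> cS k D M lab2" using c_nb_S[OF ok2 bS b'] .
  have t1: "t - 1 \<le> k" using tk by simp
  show ?thesis
  proof (cases a)
    case (BB x)
    then obtain y where b: "b = BB y" using r by (cases b) (auto simp: Rl_def)
    have x: "x < M" and y: "y < M" using aS bS BB b by auto
    consider "p = 0" | "p = 1" | "p = 2" using a' BB by (auto split: if_splits)
    then show ?thesis
    proof cases
      case 1
      then show ?thesis using BB b a' b' a'S b'S t1 mod_fact2[OF x MM] mod_fact2[OF y MM] by (auto simp: Rl_def)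
    next
      case 2
      then show ?thesis using BB b a' b' a'S b'S t1 mod_facts(3)[OF x MM] mod_facts(3)[OF y MM] by (auto simp: Rl_def)
    next
      case 3
      then show ?thesis using BB b a' b' a'S b'S t1 tk t by (auto simp: Rl_def)
    qed
  next
    case (TN g ps)
    then obtain g' where b: "b = TN g' ps" and C: "length ps + t < k \<or> (ps \<noteq> [] \<and> bag k D lab1 lab2 g g' (last ps)) \<or> fag k D lab1 lab2 g g'"
      using r by (cases b) (auto simp: Rl_def)
    show ?thesis
    proof (cases "ps = []")
      case True
      then have C': "t < k \<or> fag k D lab1 lab2 g g'" using C by simp
      consider "p < D" | "p = D" using a' TN True by (auto split: if_splits)
      then show ?thesis
      proof cases
        case 1
        then have "a' = TN g [p]" "b' = TN g' [p]" using a' b' TN b True by auto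
        then show ?thesis using TN b True a'S b'S t1 C' t by (auto simp: Rl_def)
      next
        case 2
        then have "a' = BB g" "b' = BB g'" using a' b' TN b True by auto
        then show ?thesis using TN b True a'S b'S t1 by (auto simp: Rl_def)
      qed
    next
      case False
      consider "p = 0" | "p \<noteq> 0" "length ps < k" | "p \<noteq> 0" "\<not> length ps < k" by blast
      then show ?thesis
      proof cases
        case 1
        then have e: "a' = TN g (tl ps)" "b' = TN g' (tl ps)" using a' b' TN b False by auto
        have "length (tl ps) + (t - 1) < k \<or> (tl ps \<noteq> [] \<and> bag k D lab1 lab2 g g' (last (tl ps))) \<or> fag k D lab1 lab2 g g'"
        proof (cases "tl ps = []")
          case True
          have "t - 1 < k" using tk t by linarith
          then show ?thesis using True by simp
        next
          case F2: False
          have "last (tl ps) = last ps" using F2 False by (cases ps) auto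
          then show ?thesis using C F2 by auto
        qed
        then show ?thesis using e TN b a'S b'S t1 by (auto simp: Rl_def)
      next
        case 2
        then have e: "a' = TN g ((p - 1) # ps)" "b' = TN g' ((p - 1) # ps)" using a' b' TN b False
          by (auto split: if_splits)
        have "length ((p - 1) # ps) + (t - 1) < k \<or> ((p - 1) # ps \<noteq> [] \<and> bag k D lab1 lab2 g g' (last ((p - 1) # ps))) \<or> fag k D lab1 lab2 g g'"
          using C False t by auto
        then show ?thesis using e TN b a'S b'S t1 by (auto simp: Rl_def)
      next
        case 3
        then have e: "a' = PN g ps (p - 1)" "b' = PN g' ps (p - 1)" using a' b' TN b False
          by (auto split: if_splits)
        have "bag k D lab1 lab2 g g' (last ps)" using C 3 fag_bag by auto
        then show ?thesis using e TN b a'S b'S t1 by (auto simp: Rl_def)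
      qed
    qed
  next
    case (PN g L e)
    then obtain g' where b: "b = PN g' L e" and C: "bag k D lab1 lab2 g g' (last L)"
      using r by (cases b) (auto simp: Rl_def)
    have p: "p = 0" using a' PN by (auto split: if_splits)
    have "L \<in> leaves k D" using aS PN by simp
    then have Lne: "L \<noteq> []" using kk by (auto simp: leaves_def)
    have e: "a' = TN g L" "b' = TN g' L" using a' b' PN b p by auto
    then show ?thesis using e PN b a'S b'S t1 C Lne by (auto simp: Rl_def)
  qed
qed

lemma R_view: "R t a b \<Longrightarrow> aview nb1 (cdeg k D lab1) (cport D M) t a = aview nb2 (cdeg k D lab2) (cport D M) t b"
  by (rule bisim_aview[where R = R]) (use R_deg R_None R_step in blast)+

end

fun pcode :: "nat list \<Rightarrow> (nat \<times> nat) list" where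
  "pcode [] = []"
| "pcode (c # ps) = (if ps = [] then [(c, 0)] else pcode ps @ [(Suc c, 0)])"

lemma length_code: "length (pcode ps) = length ps"
  by (induction ps) auto

context
  fixes k D M :: nat and lab :: "nat \<Rightarrow> nat list \<Rightarrow> nat"
  assumes ok: "cok k D M lab"
begin

lemma code_follow: "ps \<in> tpaths k D \<Longrightarrow> afollow (cnb k D M lab) (cport D M) (TN g []) (pcode ps) = Some (TN g ps)"
proof (induction ps)
  case Nil then show ?case by simp
next
  case (Cons c ps)
  have c: "c < D" and l: "Suc (length ps) \<le> k" and ps: "ps \<in> tpaths k D" using Cons.prems by (auto simp: tpaths_Cons)
  show ?case
  proof (cases "ps = []")
    case True then show ?thesis using c by simp
  next
    case False
    have "afollow (cnb k D M lab) (cport D M) (TN g []) (pcode ps) = Some (TN g ps)" using Cons.IH ps .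
    then show ?thesis using False c l by (simp add: afollow_append)
  qed
qed

lemma root_follow: "afollow (cnb k D M lab) (cport D M) (TN g []) [(D, 2)] = Some (BB g)"
  by simp

lemma root_detect:
  assumes "afollow (cnb k D M lab) (cport D M) a [(D, 2)] \<noteq> None"
  shows "\<exists>g. a = TN g []"
proof -
  have D: "4 \<le> D" using ok unfolding cok_def by simp
  show ?thesis
  proof (cases a)
    case (BB x) then show ?thesis using assms D by simp
  next
    case (TN g ps)
    show ?thesis
    proof (cases "ps = []")
      case True then show ?thesis using TN by simp
    next
      case False then show ?thesis using TN assms D by (auto split: if_splits)
    qed
  next
    case (PN g L e) then show ?thesis using assms D by simp
  qed
qed

end

definition LabS :: "nat \<Rightarrow> nat \<Rightarrow> (nat list \<Rightarrow> nat) set" where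
  "LabS k D = PiE (leaves k D) (\<lambda>_. {..<Suc D})"
definition NN :: "nat \<Rightarrow> nat \<Rightarrow> nat" where "NN k D = card (LabS k D)"
definition tlab :: "nat \<Rightarrow> nat \<Rightarrow> nat \<Rightarrow> nat list \<Rightarrow> nat" where
  "tlab k D = (SOME h. bij_betw h {..<NN k D} (LabS k D))"
definition ty :: "nat \<Rightarrow> nat \<Rightarrow> nat" where
  "ty j g = (if g \<le> 2 * j then g div 2 else (g + 1) div 2)"
definition MM :: "nat \<Rightarrow> nat \<Rightarrow> nat" where "MM k D = 2 * NN k D - 1"
definition labj :: "nat \<Rightarrow> nat \<Rightarrow> nat \<Rightarrow> nat \<Rightarrow> nat list \<Rightarrow> nat" where
  "labj k D j g L = min D (tlab k D (ty j g) L)"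

lemma leaves_finite: "finite (leaves k D)"
  unfolding leaves_def using finite_lists_length_eq[of "{..<D}" k] by (simp add: conj_commute)

lemma leaves_card: "card (leaves k D) = D ^ k"
  unfolding leaves_def using card_lists_length_eq[of "{..<D}" k] by (simp add: conj_commute)

lemma LabS_finite: "finite (LabS k D)"
  unfolding LabS_def using leaves_finite by (intro finite_PiE) auto

lemma NN_eq: "NN k D = Suc D ^ (D ^ k)"
  unfolding NN_def LabS_def using leaves_finite leaves_card by (simp add: card_PiE)

lemma tlab_bij: "bij_betw (tlab k D) {..<NN k D} (LabS k D)"
proof -
  have "\<exists>h. bij_betw h {..<NN k D} (LabS k D)"
    using ex_bij_betw_nat_finite[OF LabS_finite[of k D]] unfolding NN_def by (simp add: atLeast0LessThan)
  then show ?thesis unfolding tlab_def by (rule someI_ex)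
qed

lemma tlab_in: "i < NN k D \<Longrightarrow> tlab k D i \<in> LabS k D"
  using tlab_bij by (auto simp: bij_betw_def)

lemma tlab_inj: "i < NN k D \<Longrightarrow> i' < NN k D \<Longrightarrow> tlab k D i = tlab k D i' \<Longrightarrow> i = i'"
  using tlab_bij unfolding bij_betw_def inj_on_def by blast

lemma tlab_surj: "f \<in> LabS k D \<Longrightarrow> \<exists>i < NN k D. tlab k D i = f"
  using tlab_bij unfolding bij_betw_def by (metis imageE lessThan_iff)

lemma tlab_lt: "i < NN k D \<Longrightarrow> L \<in> leaves k D \<Longrightarrow> tlab k D i L \<le> D"
  using tlab_in[of i k D] unfolding LabS_def by (auto dest: PiE_mem)

lemma tlab_diff: "i < NN k D \<Longrightarrow> i' < NN k D \<Longrightarrow> i \<noteq> i' \<Longrightarrow> \<exists>L\<in>leaves k D. tlab k D i L \<noteq> tlab k D i' L"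
  using tlab_inj tlab_in unfolding LabS_def by (metis PiE_ext)

lemma tlab_branch:
  assumes i: "i < NN k D" and b: "b < D" and k: "1 \<le> k" and D: "2 \<le> D"
  shows "\<exists>i' < NN k D. i' \<noteq> i \<and> (\<forall>L\<in>leaves k D. last L = b \<longrightarrow> tlab k D i' L = tlab k D i L)"
proof -
  define f where "f = tlab k D i"
  define b' where "b' = (if b = 0 then 1 else 0::nat)"
  define L0 where "L0 = replicate k b'"
  have b'D: "b' < D" using D unfolding b'_def by auto
  have L0: "L0 \<in> leaves k D" unfolding L0_def leaves_def using b'D by auto
  have lastL0: "last L0 = b'" unfolding L0_def using k by (cases k) auto
  have bb: "b' \<noteq> b" unfolding b'_def by auto
  define f' where "f' = f(L0 := (f L0 + 1) mod Suc D)"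
  have fin: "f \<in> LabS k D" unfolding f_def using tlab_in[OF i] .
  have f'in: "f' \<in> LabS k D" using fin L0 unfolding f'_def LabS_def PiE_iff extensional_def by auto
  have fL0: "f L0 < Suc D" using fin L0 unfolding LabS_def by (auto dest: PiE_mem)
  have "f' L0 \<noteq> f L0"
  proof (cases "f L0 = D")
    case True then show ?thesis unfolding f'_def using D by simp
  next
    case False then have "f L0 + 1 < Suc D" using fL0 by simp
    then show ?thesis unfolding f'_def by simp
  qed
  then have ne: "f' \<noteq> f" by auto
  obtain i' where i': "i' < NN k D" "tlab k D i' = f'" using tlab_surj[OF f'in] by blast
  have "i' \<noteq> i" using i' ne f_def by auto
  moreover have "\<forall>L\<in>leaves k D. last L = b \<longrightarrow> tlab k D i' L = tlab k D i L"
    using i' lastL0 bb unfolding f'_def f_def by auto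
  ultimately show ?thesis using i' by blast
qed

lemma ty_lt: "g < 2 * N - 1 \<Longrightarrow> j < N \<Longrightarrow> ty j g < N"
  unfolding ty_def by auto

lemma ty_eq_j: "g < 2 * N - 1 \<Longrightarrow> j < N \<Longrightarrow> ty j g = j \<longleftrightarrow> g = 2 * j"
  unfolding ty_def by auto

lemma ty_two: "i < N \<Longrightarrow> j < N \<Longrightarrow> i \<noteq> j \<Longrightarrow> \<exists>g1 g2. g1 < 2 * N - 1 \<and> g2 < 2 * N - 1 \<and> g1 \<noteq> g2 \<and> ty j g1 = i \<and> ty j g2 = i"
proof -
  assume i: "i < N" and j: "j < N" and ij: "i \<noteq> j"
  show ?thesis
  proof (cases "i < j")
    case True
    then have "ty j (2 * i) = i" "ty j (2 * i + 1) = i" unfolding ty_def by auto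
    moreover have "2 * i + 1 < 2 * N - 1" using True j by linarith
    ultimately show ?thesis by (intro exI[of _ "2 * i"] exI[of _ "2 * i + 1"]) auto
  next
    case False
    then have ji: "j < i" using ij by simp
    then have "ty j (2 * i - 1) = i" "ty j (2 * i) = i" unfolding ty_def by auto
    moreover have "2 * i < 2 * N - 1" using i by linarith
    moreover have "2 * i - 1 \<noteq> 2 * i" using ji by linarith
    ultimately show ?thesis by (intro exI[of _ "2 * i - 1"] exI[of _ "2 * i"]) auto
  qed
qed

lemma NN_ge: "1 \<le> D \<Longrightarrow> 2 \<le> NN k D"
proof -
  assume D: "1 \<le> D"
  have "1 \<le> D ^ k" using D by simp
  then have "Suc D ^ 1 \<le> Suc D ^ (D ^ k)" by (intro power_increasing) auto
  then show ?thesis using D unfolding NN_eq by simp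
qed

lemma labj_ok: "1 \<le> k \<Longrightarrow> 4 \<le> D \<Longrightarrow> cok k D (MM k D) (labj k D j)"
proof -
  assume "1 \<le> k" "4 \<le> D"
  moreover have "3 \<le> MM k D" using NN_ge[of D k] \<open>4 \<le> D\<close> unfolding MM_def by simp
  ultimately show ?thesis unfolding cok_def labj_def by simp
qed

lemma labj_eq: "g < MM k D \<Longrightarrow> j < NN k D \<Longrightarrow> L \<in> leaves k D \<Longrightarrow> labj k D j g L = tlab k D (ty j g) L"
  unfolding labj_def MM_def using tlab_lt ty_lt by (metis min_absorb2)

lemma aview_mem: "(ps, d) \<in> aview nb ad ap t a \<longleftrightarrow> length ps \<le> t \<and> (\<exists>x. afollow nb ap a ps = Some x \<and> d = ad x)"
  unfolding aview_def by auto

lemma ty_self: "ty i (2 * i) = i" unfolding ty_def by simp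

context
  fixes k D :: nat
  assumes k: "1 \<le> k" and D: "4 \<le> D"
begin

abbreviation "N \<equiv> NN k D"
abbreviation "M \<equiv> MM k D"
abbreviation "AV j \<equiv> aview (cnb k D M (labj k D j)) (cdeg k D (labj k D j)) (cport D M)"
abbreviation "SS j \<equiv> cS k D M (labj k D j)"

lemma M_eq: "M = 2 * N - 1" unfolding MM_def by simp

lemma okj: "cok k D M (labj k D j)" using labj_ok[OF k D] .

lemma uniq:
  assumes j: "j < N" and a: "a \<in> SS j" and ne: "a \<noteq> TN (2 * j) []"
  shows "AV j k a \<noteq> AV j k (TN (2 * j) [])"
proof
  assume eq: "AV j k a = AV j k (TN (2 * j) [])"
  have "([(D, 2)], 3) \<in> AV j k (TN (2 * j) [])" using k by (auto simp: aview_mem)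
  then have "([(D, 2)], 3) \<in> AV j k a" using eq by simp
  then have "afollow (cnb k D M (labj k D j)) (cport D M) a [(D, 2)] \<noteq> None" by (auto simp: aview_mem)
  then obtain g where ag: "a = TN g []" using root_detect[OF okj] by blast
  have g: "g < M" using a ag by simp
  have gne: "g \<noteq> 2 * j" using ne ag by simp
  have tyg: "ty j g \<noteq> j" using ty_eq_j[of g N j] g gne j M_eq by simp
  have tyl: "ty j g < N" using ty_lt[of g N j] g j M_eq by simp
  obtain L where L: "L \<in> leaves k D" and Ld: "tlab k D (ty j g) L \<noteq> tlab k D j L"
    using tlab_diff[OF tyl j tyg] by blast
  have Lt: "L \<in> tpaths k D" using L leaves_tpaths by blast
  have Lk: "length L = k" using L by (simp add: leaves_def)
  have f1: "afollow (cnb k D M (labj k D j)) (cport D M) (TN (2 * j) []) (pcode L) = Some (TN (2 * j) L)"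
    using code_follow[OF okj Lt] .
  have f2: "afollow (cnb k D M (labj k D j)) (cport D M) (TN g []) (pcode L) = Some (TN g L)"
    using code_follow[OF okj Lt] .
  have "(pcode L, Suc (labj k D j (2 * j) L)) \<in> AV j k (TN (2 * j) [])"
    using f1 Lk by (auto simp: aview_mem length_code)
  then have "(pcode L, Suc (labj k D j (2 * j) L)) \<in> AV j k a" using eq by simp
  then have "labj k D j (2 * j) L = labj k D j g L" using f2 ag Lk by (auto simp: aview_mem)
  moreover have "2 * j < M" using j M_eq by linarith
  ultimately have "tlab k D j L = tlab k D (ty j g) L"
    using labj_eq[OF g j L] labj_eq[OF \<open>2 * j < M\<close> j L] ty_self[of j] by simp
  then show False using Ld by simp
qed

lemma twin:
  assumes j: "j < N" and a: "a \<in> SS j" and ne: "a \<noteq> TN (2 * j) []"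
  shows "\<exists>b\<in>SS j. b \<noteq> a \<and> AV j k b = AV j k a"
proof -
  let ?R = "Rl k D M (labj k D j) (labj k D j) k"
  have RV: "?R a b \<Longrightarrow> AV j k a = AV j k b" for b using R_view[OF okj okj] by blast
  have M3: "3 \<le> M" using okj unfolding cok_def by simp
  have sametype: "\<exists>g2 < M. g2 \<noteq> g \<and> (\<forall>L. labj k D j g2 L = labj k D j g L)" if g: "g < M" "ty j g \<noteq> j" for g
  proof -
    have tyl: "ty j g < N" using ty_lt[of g N j] g j M_eq by simp
    obtain g1 g2 where "g1 < M" "g2 < M" "g1 \<noteq> g2" "ty j g1 = ty j g" "ty j g2 = ty j g"
      using ty_two[OF tyl j g(2)] M_eq by auto
    then have "g1 \<noteq> g \<or> g2 \<noteq> g" by blast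
    then show ?thesis unfolding labj_def using \<open>g1 < M\<close> \<open>g2 < M\<close> \<open>ty j g1 = ty j g\<close> \<open>ty j g2 = ty j g\<close> by auto
  qed
  have branchtype: "\<exists>g2 < M. g2 \<noteq> 2 * j \<and> bag k D (labj k D j) (labj k D j) (2 * j) g2 b" if b: "b < D" for b
  proof -
    obtain i' where i': "i' < N" "i' \<noteq> j" and ag: "\<forall>L\<in>leaves k D. last L = b \<longrightarrow> tlab k D i' L = tlab k D j L"
      using tlab_branch[OF j b k] D by auto
    obtain g1 g2 where "g1 < M" "ty j g1 = i'" using ty_two[OF i'(1) j i'(2)] M_eq by auto
    moreover have "g1 \<noteq> 2 * j" using \<open>ty j g1 = i'\<close> i'(2) ty_self[of j] by auto
    moreover have "bag k D (labj k D j) (labj k D j) (2 * j) g1 b"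
      unfolding bag_def labj_def using ag \<open>ty j g1 = i'\<close> ty_self by simp
    ultimately show ?thesis by blast
  qed
  show ?thesis
  proof (cases a)
    case (BB y)
    then have y: "y < M" using a by simp
    let ?b = "BB (Suc y mod M)"
    have "?b \<in> SS j" "?b \<noteq> a" using BB mod_facts[OF y M3] by auto
    moreover have "?R ?b a" using BB a \<open>?b \<in> SS j\<close> by (simp add: Rl_def)
    then have "AV j k ?b = AV j k a" using R_view[OF okj okj] by blast
    ultimately show ?thesis by blast
  next
    case (TN g ps)
    have g: "g < M" and ps: "ps \<in> tpaths k D" using a TN by auto
    show ?thesis
    proof (cases "ty j g = j")
      case False
      obtain g2 where g2: "g2 < M" "g2 \<noteq> g" "\<forall>L. labj k D j g2 L = labj k D j g L" using sametype[OF g False] by blast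
      let ?b = "TN g2 ps"
      have "?b \<in> SS j" "?b \<noteq> a" using g2 ps TN by auto
      moreover have "fag k D (labj k D j) (labj k D j) g2 g" using g2 unfolding fag_def by simp
      then have "?R ?b a" using TN a \<open>?b \<in> SS j\<close> by (simp add: Rl_def)
      then have "AV j k ?b = AV j k a" using R_view[OF okj okj] by blast
      ultimately show ?thesis by blast
    next
      case True
      then have g2j: "g = 2 * j" using ty_eq_j[of g N j] g j M_eq by simp
      then have psne: "ps \<noteq> []" using ne TN by simp
      have lb: "last ps < D" using last_in_set[OF psne] ps unfolding tpaths_def by auto
      obtain g2 where g2: "g2 < M" "g2 \<noteq> 2 * j" "bag k D (labj k D j) (labj k D j) (2 * j) g2 (last ps)"
        using branchtype[OF lb] by blast
      let ?b = "TN g2 ps"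
      have "?b \<in> SS j" "?b \<noteq> a" using g2 ps TN g2j by auto
      moreover have "?R a ?b" using TN a g2j g2 psne \<open>?b \<in> SS j\<close> by (simp add: Rl_def)
      then have "AV j k a = AV j k ?b" using R_view[OF okj okj] by blast
      ultimately show ?thesis by auto
    qed
  next
    case (PN g L e)
    have g: "g < M" and L: "L \<in> leaves k D" and e: "e < labj k D j g L" using a PN by auto
    show ?thesis
    proof (cases "ty j g = j")
      case False
      obtain g2 where g2: "g2 < M" "g2 \<noteq> g" "\<forall>L. labj k D j g2 L = labj k D j g L" using sametype[OF g False] by blast
      let ?b = "PN g2 L e"
      have "?b \<in> SS j" "?b \<noteq> a" using g2 L e PN by auto
      moreover have "bag k D (labj k D j) (labj k D j) g2 g (last L)" using g2 unfolding bag_def by simp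
      then have "?R ?b a" using PN a \<open>?b \<in> SS j\<close> by (simp add: Rl_def)
      then have "AV j k ?b = AV j k a" using R_view[OF okj okj] by blast
      ultimately show ?thesis by blast
    next
      case True
      then have g2j: "g = 2 * j" using ty_eq_j[of g N j] g j M_eq by simp
      have Lne: "L \<noteq> []" using L k by (auto simp: leaves_def)
      have lb: "last L < D" using last_in_set[OF Lne] L unfolding leaves_def by auto
      obtain g2 where g2: "g2 < M" "g2 \<noteq> 2 * j" and bg: "bag k D (labj k D j) (labj k D j) (2 * j) g2 (last L)"
        using branchtype[OF lb] by blast
      have "labj k D j g2 L = labj k D j g L" using bg L g2j unfolding bag_def by simp
      then have e2: "e < labj k D j g2 L" using e by simp
      let ?b = "PN g2 L e"
      have "?b \<in> SS j" "?b \<noteq> a" using g2 L e2 PN g2j by auto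
      moreover have "?R a ?b" using PN a g2j bg \<open>?b \<in> SS j\<close> by (simp add: Rl_def)
      then have "AV j k a = AV j k ?b" using R_view[OF okj okj] by blast
      ultimately show ?thesis by auto
    qed
  qed
qed

lemma twin_root:
  assumes j: "j < N"
  shows "\<exists>b\<in>SS j. b \<noteq> TN (2 * j) [] \<and> AV j (k - 1) b = AV j (k - 1) (TN (2 * j) [])"
proof -
  let ?g = "if j = 0 then 1 else 0::nat"
  have M3: "3 \<le> M" using okj unfolding cok_def by simp
  have "?g < M" using M3 by auto
  then have bS: "TN ?g [] \<in> SS j" and xS: "TN (2 * j) [] \<in> SS j"
    using j M_eq by (auto simp: tpaths_def)
  have "Rl k D M (labj k D j) (labj k D j) (k - 1) (TN ?g []) (TN (2 * j) [])"
    using bS xS k by (simp add: Rl_def)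
  then have "AV j (k - 1) (TN ?g []) = AV j (k - 1) (TN (2 * j) [])" using R_view[OF okj okj] by blast
  moreover have "TN ?g [] \<noteq> TN (2 * j) []" by auto
  ultimately show ?thesis using bS by blast
qed

lemma twin_all:
  assumes j: "j < N" and a: "a \<in> SS j"
  shows "\<exists>b\<in>SS j. b \<noteq> a \<and> AV j (k - 1) b = AV j (k - 1) a"
proof (cases "a = TN (2 * j) []")
  case True then show ?thesis using twin_root[OF j] by simp
next
  case False
  obtain b where b: "b \<in> SS j" "b \<noteq> a" "AV j k b = AV j k a" using twin[OF j a False] by blast
  have kk1: "k - 1 \<le> k" by simp
  have "AV j (k - 1) b = AV j (k - 1) a"
    using b(3) aview_restrict[OF kk1, of "cnb k D M (labj k D j)" "cdeg k D (labj k D j)" "cport D M" b]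
      aview_restrict[OF kk1, of "cnb k D M (labj k D j)" "cdeg k D (labj k D j)" "cport D M" a] by simp
  then show ?thesis using b by blast
qed

lemma maxd: "Max (cdeg k D (labj k D j) ` SS j) = Suc D"
proof (rule Max_eqI)
  show "finite (cdeg k D (labj k D j) ` SS j)" using cS_finite by simp
next
  fix d assume "d \<in> cdeg k D (labj k D j) ` SS j"
  then obtain a where a: "a \<in> SS j" "d = cdeg k D (labj k D j) a" by blast
  show "d \<le> Suc D" using a D by (cases a) (auto simp: labj_def)
next
  have "TN 0 [] \<in> SS j" using okj[of j] unfolding cok_def by (auto simp: tpaths_def)
  moreover have "cdeg k D (labj k D j) (TN 0 []) = Suc D" using k by simp
  ultimately show "Suc D \<in> cdeg k D (labj k D j) ` SS j" by (metis imageI)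
qed

lemma cross:
  assumes i: "i < N" and j: "j < N" and ij: "i \<noteq> j"
  shows "\<exists>b1\<in>SS j. \<exists>b2\<in>SS j. b1 \<noteq> b2 \<and> AV j k b1 = AV i k (TN (2 * i) []) \<and> AV j k b2 = AV i k (TN (2 * i) [])"
proof -
  obtain g1 g2 where g: "g1 < M" "g2 < M" "g1 \<noteq> g2" "ty j g1 = i" "ty j g2 = i"
    using ty_two[OF i j ij] M_eq by auto
  have xS: "TN (2 * i) [] \<in> SS i" using i M_eq by (auto simp: tpaths_def)
  have R: "Rl k D M (labj k D i) (labj k D j) k (TN (2 * i) []) (TN g []) \<and> TN g [] \<in> SS j"
    if "g < M" "ty j g = i" for g
  proof -
    have gS: "TN g [] \<in> SS j" using that by (auto simp: tpaths_def)
    have "fag k D (labj k D i) (labj k D j) (2 * i) g" using that ty_self unfolding fag_def labj_def by simp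
    then show ?thesis using xS gS by (simp add: Rl_def)
  qed
  have V: "AV j k (TN g []) = AV i k (TN (2 * i) [])" if "g < M" "ty j g = i" for g
  proof -
    have "AV i k (TN (2 * i) []) = AV j k (TN g [])"
      using R_view[OF okj okj] R[OF that] by blast
    then show ?thesis by simp
  qed
  show ?thesis using R[OF g(1,4)] R[OF g(2,5)] V[OF g(1,4)] V[OF g(2,5)] g(3) by blast
qed

end

definition Gf :: "nat \<Rightarrow> nat \<Rightarrow> nat \<Rightarrow> pgraph" where
  "Gf k D j = mkG (cS k D (MM k D) (labj k D j)) (cnb k D (MM k D) (labj k D j)) (cport D (MM k D))"

definition xe :: "nat \<Rightarrow> nat \<Rightarrow> nat \<Rightarrow> nat" where
  "xe k D j = enc_of (cS k D (MM k D) (labj k D j)) (TN (2 * j) [])"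

context
  fixes k D :: nat
  assumes k: "1 \<le> k" and D: "4 \<le> D"
begin

lemma inst: "absg (SS k D j) (cnb k D (M k D) (labj k D j)) (cdeg k D (labj k D j)) (cport D (M k D)) (BB 0)"
  using c_absg[OF okj[OF k D]] .

lemma xS: "j < N k D \<Longrightarrow> TN (2 * j) [] \<in> SS k D j"
  using M_eq[OF k D] by (auto simp: tpaths_def)

lemma Gview: "v < card (SS k D j) \<Longrightarrow> view_trunc (Gf k D j) t v = AV k D j t (inv_into (SS k D j) (enc_of (SS k D j)) v)"
  unfolding Gf_def using absg.G_view[OF inst] by blast

lemma fam:
  assumes j: "j < N k D"
  shows "wf_pgraph (Gf k D j) \<and> feasible (Gf k D j) \<and> maxdeg (Gf k D j) = Suc D \<and> selection_index (Gf k D j) = k"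
proof (intro conjI)
  show "wf_pgraph (Gf k D j)" unfolding Gf_def using absg.G_wf[OF inst] .
  show "feasible (Gf k D j)" unfolding Gf_def
    using absg.feas[OF inst xS[OF j]] uniq[OF k D j] by blast
  show "maxdeg (Gf k D j) = Suc D" unfolding Gf_def using absg.G_maxdeg[OF inst] maxd[OF k D] by simp
  have "selection_index (Gf k D j) = k" unfolding Gf_def
    using absg.selidx[OF inst xS[OF j]] uniq[OF k D j] twin_all[OF k D j] k by blast
  then show "selection_index (Gf k D j) = k" .
qed

lemma leader_is_x:
  assumes j: "j < N k D" and S: "solves_selection_in A Orc (Gf k D j) k"
  shows "sel_output A Orc (Gf k D j) (xe k D j) = Some True \<and> (\<exists>t0\<le>k. A (Orc (Gf k D j)) (view_trunc (Gf k D j) t0 (xe k D j)) \<noteq> None)"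
proof -
  let ?S = "SS k D j" and ?G = "Gf k D j"
  let ?dec = "inv_into ?S (enc_of ?S)"
  have nG: "pg_n ?G = card ?S" unfolding Gf_def using absg.G_n[OF inst] .
  obtain l where l: "l < pg_n ?G" "sel_output A Orc ?G l = Some True"
    and U: "\<forall>v<pg_n ?G. v \<noteq> l \<longrightarrow> view_trunc ?G k v \<noteq> view_trunc ?G k l"
    using leader_unique[OF S] by blast
  have lS: "?dec l \<in> ?S" using absg.dec_S[OF inst] l nG by simp
  have "l = xe k D j"
  proof (rule ccontr)
    assume ne: "l \<noteq> xe k D j"
    have "?dec l \<noteq> TN (2 * j) []"
    proof
      assume "?dec l = TN (2 * j) []"
      then have "enc_of ?S (?dec l) = xe k D j" unfolding xe_def by simp
      then show False using absg.enc_dec[OF inst] l nG ne by simp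
    qed
    then obtain b where b: "b \<in> ?S" "b \<noteq> ?dec l" "AV k D j k b = AV k D j k (?dec l)"
      using twin[OF k D j lS] by blast
    have eb: "enc_of ?S b < card ?S" using absg.enc_lt[OF inst b(1)] .
    have db: "?dec (enc_of ?S b) = b" using absg.dec_enc[OF inst b(1)] .
    have "enc_of ?S b \<noteq> l" using db b(2) by auto
    moreover have "view_trunc ?G k (enc_of ?S b) = view_trunc ?G k l"
      using Gview[OF eb] Gview[of l] l nG db b(3) by simp
    ultimately show False using U eb nG by simp
  qed
  moreover obtain t0 where "t0 \<le> k" "A (Orc ?G) (view_trunc ?G t0 l) \<noteq> None"
    using S l unfolding solves_selection_in_def by blast
  ultimately show ?thesis using l by blast
qed

lemma fam_inj:
  assumes S: "\<forall>j<N k D. solves_selection_in A Orc (Gf k D j) k"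
  shows "inj_on (\<lambda>j. Orc (Gf k D j)) {..<N k D}"
proof (rule inj_onI, rule ccontr)
  fix i j assume i: "i \<in> {..<N k D}" and j: "j \<in> {..<N k D}" and eq: "Orc (Gf k D i) = Orc (Gf k D j)" and ij: "i \<noteq> j"
  then have i': "i < N k D" and j': "j < N k D" by auto
  obtain t0 where lj: "sel_output A Orc (Gf k D j) (xe k D j) = Some True" and t0: "t0 \<le> k"
    "A (Orc (Gf k D j)) (view_trunc (Gf k D j) t0 (xe k D j)) \<noteq> None"
    using leader_is_x[OF j'] S j' by blast
  obtain b1 b2 where b: "b1 \<in> SS k D i" "b2 \<in> SS k D i" "b1 \<noteq> b2"
    "AV k D i k b1 = AV k D j k (TN (2 * j) [])" "AV k D i k b2 = AV k D j k (TN (2 * j) [])"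
    using cross[OF k D j' i' ij[symmetric]] by blast
  let ?Si = "SS k D i" and ?Sj = "SS k D j"
  have xj: "xe k D j < card ?Sj" "inv_into ?Sj (enc_of ?Sj) (xe k D j) = TN (2 * j) []"
    unfolding xe_def using absg.enc_lt[OF inst xS[OF j']] absg.dec_enc[OF inst xS[OF j']] by auto
  have lead: "sel_output A Orc (Gf k D i) (enc_of ?Si b) = Some True \<and> enc_of ?Si b < card ?Si"
    if bb: "b \<in> ?Si" "AV k D i k b = AV k D j k (TN (2 * j) [])" for b
  proof -
    have eb: "enc_of ?Si b < card ?Si" using absg.enc_lt[OF inst bb(1)] .
    have "view_trunc (Gf k D i) k (enc_of ?Si b) = view_trunc (Gf k D j) k (xe k D j)"
      using Gview[OF eb] Gview[OF xj(1)] xj(2) absg.dec_enc[OF inst bb(1)] bb(2) by simp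
    then have "sel_output A Orc (Gf k D j) (xe k D j) = sel_output A Orc (Gf k D i) (enc_of ?Si b)"
      using sel_eq[of "Gf k D j" k "xe k D j" "Gf k D i" "enc_of ?Si b" t0 A "Orc (Gf k D j)" Orc] t0 eq by simp
    then show ?thesis using lj eb by simp
  qed
  have nG: "pg_n (Gf k D i) = card ?Si" unfolding Gf_def using absg.G_n[OF inst] .
  have "card {v. v < pg_n (Gf k D i) \<and> sel_output A Orc (Gf k D i) v = Some True} = 1"
    using S i' unfolding solves_selection_in_def by blast
  then obtain l where L: "{v. v < pg_n (Gf k D i) \<and> sel_output A Orc (Gf k D i) v = Some True} = {l}"
    by (rule card_1_singletonE)
  have "enc_of ?Si b1 \<in> {l}" "enc_of ?Si b2 \<in> {l}" using lead[OF b(1) b(4)] lead[OF b(2) b(5)] nG L by auto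
  then have "enc_of ?Si b1 = enc_of ?Si b2" by simp
  then show False using absg.enc_inj[OF inst b(1) b(2)] b(3) by simp
qed

end

lemma count_lists:
  fixes f :: "nat \<Rightarrow> bool list"
  assumes inj: "inj_on f {..<n0}" and NL: "2 ^ L \<le> n0" and L: "1 \<le> L"
  shows "\<exists>j<n0. L \<le> length (f j)"
proof (rule ccontr)
  assume "\<not> (\<exists>j<n0. L \<le> length (f j))"
  then have "f ` {..<n0} \<subseteq> {xs. set xs \<subseteq> UNIV \<and> length xs \<le> L - 1}" by force
  then have "card (f ` {..<n0}) \<le> card {xs :: bool list. set xs \<subseteq> UNIV \<and> length xs \<le> L - 1}"
    by (intro card_mono finite_lists_length_le) auto
  also have "\<dots> = (\<Sum>i\<le>L - 1. 2 ^ i)" using card_lists_length_le[of "UNIV :: bool set" "L - 1"] by simp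
  also have "\<dots> = (\<Sum>i=0..<L. 2 ^ i)"
  proof -
    have "{..L - 1} = {0..<L}" using L by auto
    then show ?thesis by simp
  qed
  also have "\<dots> = 2 ^ L - 1" by (rule sum_power2)
  finally have "n0 \<le> 2 ^ L - 1" using card_image[OF inj] by simp
  moreover have "(1::nat) \<le> 2 ^ L" by simp
  ultimately show False using NL by linarith
qed

lemma log_ex: "1 \<le> (n::nat) \<Longrightarrow> \<exists>q. 2 ^ q \<le> n \<and> n < 2 ^ Suc q"
proof (induction n rule: less_induct)
  case (less n)
  show ?case
  proof (cases "n = 1")
    case True then show ?thesis by (intro exI[of _ 0]) simp
  next
    case False
    then have "1 \<le> n div 2" "n div 2 < n" using less.prems by auto
    then obtain q where q: "2 ^ q \<le> n div 2" "n div 2 < 2 ^ Suc q" using less.IH by blast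
    have "2 ^ Suc q \<le> n" using q(1) by simp
    moreover have "n < 2 ^ Suc (Suc q)" using q(2) by simp
    ultimately show ?thesis by blast
  qed
qed

theorem mainTheorem4:
  shows "\<exists>c::real. c > 0 \<and>
    (\<forall>(A :: algorithm) (Orc :: advice_map).
       (\<forall>G. wf_pgraph G \<and> feasible G \<longrightarrow> solves_selection_in A Orc G (selection_index G)) \<longrightarrow>
       (\<forall>k::nat. \<forall>\<Delta>::nat. k \<ge> 1 \<and> \<Delta> \<ge> 5 \<longrightarrow>
          (\<exists>G. wf_pgraph G \<and> feasible G \<and> maxdeg G = \<Delta> \<and> selection_index G = k \<and>
               real (length (Orc G)) \<ge> c * (real \<Delta> - 1) ^ k * ln (real \<Delta>))))"
proof (intro exI[of _ "1/2"] conjI allI impI)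
  show "(0::real) < 1/2" by simp
next
  fix A :: algorithm and Orc :: advice_map and k \<Delta> :: nat
  assume H: "\<forall>G. wf_pgraph G \<and> feasible G \<longrightarrow> solves_selection_in A Orc G (selection_index G)"
    and kD: "k \<ge> 1 \<and> \<Delta> \<ge> 5"
  define D where "D = \<Delta> - 1"
  have k: "1 \<le> k" and D: "4 \<le> D" and DD: "\<Delta> = Suc D" using kD unfolding D_def by auto
  have F: "\<And>j. j < N k D \<Longrightarrow> wf_pgraph (Gf k D j) \<and> feasible (Gf k D j) \<and> maxdeg (Gf k D j) = Suc D \<and> selection_index (Gf k D j) = k"
    by (rule fam[OF k D])
  have S: "\<forall>j<N k D. solves_selection_in A Orc (Gf k D j) k"
  proof (intro allI impI)
    fix j assume j: "j < N k D"
    have "solves_selection_in A Orc (Gf k D j) (selection_index (Gf k D j))" using H F[OF j] by blast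
    then show "solves_selection_in A Orc (Gf k D j) k" using F[OF j] by simp
  qed
  have inj: "inj_on (\<lambda>j. Orc (Gf k D j)) {..<N k D}" using fam_inj[OF k D S] .
  obtain q where q: "2 ^ q \<le> \<Delta>" "\<Delta> < 2 ^ Suc q" using log_ex[of \<Delta>] kD by auto
  have q1: "1 \<le> q"
  proof (rule ccontr)
    assume "\<not> 1 \<le> q" then have "q = 0" by simp
    then show False using q kD by simp
  qed
  define L where "L = q * D ^ k"
  have L1: "1 \<le> L" unfolding L_def using q1 D by simp
  have "(2::nat) ^ L = (2 ^ q) ^ (D ^ k)" unfolding L_def by (simp add: power_mult)
  also have "\<dots> \<le> \<Delta> ^ (D ^ k)" using q(1) by (rule power_mono) simp
  also have "\<dots> = N k D" using NN_eq DD by simp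
  finally have NL: "2 ^ L \<le> N k D" .
  obtain j where j: "j < N k D" "L \<le> length (Orc (Gf k D j))" using count_lists[OF inj NL L1] by blast
  have lnD: "ln (real \<Delta>) \<le> 2 * real q"
  proof -
    have "real \<Delta> < real (2 ^ Suc q)" using q(2) by (simp only: of_nat_less_iff)
    then have r: "real \<Delta> < (2::real) ^ Suc q" by simp
    have "0 < real \<Delta>" using kD by simp
    then have "ln (real \<Delta>) < ln ((2::real) ^ Suc q)" using r by simp
    also have "\<dots> = real (Suc q) * ln 2" by (rule ln_realpow)
    also have "\<dots> \<le> real (Suc q) * 1" using ln_2_less_1 by (intro mult_left_mono) auto
    also have "\<dots> \<le> 2 * real q" using q1 by simp
    finally show ?thesis by simp
  qed
  have "1/2 * (real \<Delta> - 1) ^ k * ln (real \<Delta>) = 1/2 * real D ^ k * ln (real \<Delta>)" using DD by simp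
  also have "\<dots> \<le> 1/2 * real D ^ k * (2 * real q)" using lnD by (intro mult_left_mono) auto
  also have "\<dots> = real L" unfolding L_def by simp
  also have "\<dots> \<le> real (length (Orc (Gf k D j)))" using j(2) by simp
  finally have len: "1/2 * (real \<Delta> - 1) ^ k * ln (real \<Delta>) \<le> real (length (Orc (Gf k D j)))" .
  show "\<exists>G. wf_pgraph G \<and> feasible G \<and> maxdeg G = \<Delta> \<and> selection_index G = k \<and>
               real (length (Orc G)) \<ge> 1/2 * (real \<Delta> - 1) ^ k * ln (real \<Delta>)"
    using F[OF j(1)] len DD by blast
qed

end
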